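(* Let $P\subset\mathbb{H}^4$ be the regular right-angled compact hyperbolic $120$-cell. A maximum set of pairwise disjoint walls of $P$ has $24$ elements.
   Context: Use the hyperboloid model $\mathbb{H}^4=\{x\in\mathbb{R}^5:(x,x)=-1,x_0>0\}$ with Minkowski form $(x,y)=-x_0y_0+\sum_{i=1}^4x_iy_i$. The hyperbolic $120$-cell $P$ is the compact regular convex polytope in $\mathbb{H}^4$ with $120$ dodecahedral walls ($3$-dimensional faces), any two intersecting walls meeting at right angles; it is bounded by the $120$ hyperplanes $\vec n^\perp\cap\mathbb{H}^4$ where, with $\tau=(1+\sqrt5)/2$, $\vec n$ ranges over: the $8$ vectors obtained by permuting the last four coordinates of $(\sqrt{2\tau},\pm2,0,0,0)$; the $16$ vectors $(\sqrt{2\tau},\pm1,\pm1,\pm1,\pm1)$; and the $96$ vectors obtained by even permutations of the last four coordinates of $(\sqrt{2\tau},\pm\tau,\pm1,\pm\tau^{-1},0)$. Two walls are disjoint if they do not intersect in $\mathbb{H}^4$. Each wall meets exactly $12$ other walls. *)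

theory Defs
  imports "HOL-Analysis.Analysis" "HOL-Combinatorics.Permutations"
begin

text \<open>Points of R^5 are \<open>real^5\<close>; coordinate x_0 is component 1, x_1..x_4 are components 2..5.\<close>

definition mink :: "real^5 \<Rightarrow> real^5 \<Rightarrow> real" where
  "mink x y = - (x$1 * y$1) + x$2 * y$2 + x$3 * y$3 + x$4 * y$4 + x$5 * y$5"

definition H4 :: "(real^5) set" where
  "H4 = {x. mink x x = -1 \<and> x$1 > 0}"

definition tau :: real where "tau = (1 + sqrt 5) / 2"

definition mk :: "real \<Rightarrow> real list \<Rightarrow> real^5" where
  "mk a xs = vector [a, xs!0, xs!1, xs!2, xs!3]"

definition normals :: "(real^5) set" where
  "normals =
     {mk (sqrt (2*tau)) xs | xs s. s \<in> {-1,1} \<and> mset xs = mset [s*2, 0, 0, 0]}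
   \<union> {mk (sqrt (2*tau)) [a,b,c,d] | a b c d. a \<in> {-1,1} \<and> b \<in> {-1,1} \<and> c \<in> {-1,1} \<and> d \<in> {-1,1}}
   \<union> {mk (sqrt (2*tau)) (permute_list p [s1*tau, s2, s3/tau, 0]) | p s1 s2 s3.
        p permutes {..<4} \<and> evenperm p \<and> s1 \<in> {-1,1} \<and> s2 \<in> {-1,1} \<and> s3 \<in> {-1,1}}"

text \<open>The 120-cell: the intersection of the half-spaces containing the centre (1,0,0,0,0).\<close>
definition cell120 :: "(real^5) set" where
  "cell120 = {x \<in> H4. \<forall>n \<in> normals. mink x n \<le> 0}"

definition wall :: "real^5 \<Rightarrow> (real^5) set" where
  "wall n = {x \<in> cell120. mink x n = 0}"

definition walls :: "(real^5) set set" where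
  "walls = wall ` normals"

definition pairwise_disjoint_walls :: "(real^5) set set \<Rightarrow> bool" where
  "pairwise_disjoint_walls W \<longleftrightarrow> W \<subseteq> walls \<and> (\<forall>A\<in>W. \<forall>B\<in>W. A \<noteq> B \<longrightarrow> A \<inter> B = {})"

end

theory Submission
  imports Defs
begin

lemma sqrt5_bounds: "2.236 < sqrt 5" "sqrt 5 < 2.2361"
proof -
  have "(2.236::real) = sqrt (2.236^2)" by simp
  also have "\<dots> < sqrt 5" by (subst real_sqrt_less_iff) (simp add: power2_eq_square)
  finally show "2.236 < sqrt 5" .
  have "sqrt 5 < sqrt (2.2361^2)" by (subst real_sqrt_less_iff) (simp add: power2_eq_square)
  also have "\<dots> = 2.2361" by simp
  finally show "sqrt 5 < 2.2361" .
qed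

lemma tau_bounds: "1.618 < tau" "tau < 1.61806"
  using sqrt5_bounds unfolding tau_def by auto

lemma tau_sq: "tau * tau = tau + 1"
proof -
  have "sqrt 5 * sqrt 5 = 5" by simp
  then show ?thesis unfolding tau_def by (simp add: field_simps)
qed

lemma tau_pos: "tau > 0" using tau_bounds by simp

lemma tau_inv: "1 / tau = tau - 1"
  using tau_sq tau_pos by (simp add: field_simps)

definition cc :: real where "cc = sqrt (2 * tau)"

lemma cc_pos: "cc > 0" unfolding cc_def using tau_pos by simp
lemma cc_sq: "cc * cc = 2 * tau" unfolding cc_def using tau_pos by simp

lemma exhaust_5:
  fixes x :: 5
  shows "x = 1 \<or> x = 2 \<or> x = 3 \<or> x = 4 \<or> x = 5"
proof (induct x)
  case (of_int z)
  then have "z = 0 \<or> z = 1 \<or> z = 2 \<or> z = 3 \<or> z = 4" by fastforce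
  then show ?case by (elim disjE) simp_all
qed

lemma forall_5: "(\<forall>i::5. P i) \<longleftrightarrow> P 1 \<and> P 2 \<and> P 3 \<and> P 4 \<and> P 5"
  by (metis exhaust_5)

lemma vec5_eq: "(x::real^5) = y \<longleftrightarrow> x$1 = y$1 \<and> x$2 = y$2 \<and> x$3 = y$3 \<and> x$4 = y$4 \<and> x$5 = y$5"
  unfolding vec_eq_iff forall_5 ..

lemma mk_comp [simp]:
  "mk a xs $ 1 = a" "mk a xs $ 2 = xs!0" "mk a xs $ 3 = xs!1" "mk a xs $ 4 = xs!2" "mk a xs $ 5 = xs!3"
  unfolding mk_def vector_def by simp_all

lemma mink_mk: "mink (mk a xs) (mk b ys) = - (a*b) + xs!0*ys!0 + xs!1*ys!1 + xs!2*ys!2 + xs!3*ys!3"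
  by (simp add: mink_def)

lemma mk_eq: "mk a xs = mk b ys \<longleftrightarrow> a = b \<and> xs!0 = ys!0 \<and> xs!1 = ys!1 \<and> xs!2 = ys!2 \<and> xs!3 = ys!3"
  by (simp add: vec5_eq)

lemma mink_sym: "mink x y = mink y x" by (simp add: mink_def algebra_simps)
lemma mink_add_left: "mink (x + y) z = mink x z + mink y z" by (simp add: mink_def algebra_simps)
lemma mink_add_right: "mink z (x + y) = mink z x + mink z y" by (simp add: mink_def algebra_simps)
lemma mink_scale_left: "mink (a *\<^sub>R x) z = a * mink x z" by (simp add: mink_def algebra_simps)
lemma mink_scale_right: "mink z (a *\<^sub>R x) = a * mink z x" by (simp add: mink_def algebra_simps)

section \<open>Parametrisation of the normals\<close>

definition actl :: "(nat \<Rightarrow> nat) \<Rightarrow> (nat \<Rightarrow> real) \<Rightarrow> real list \<Rightarrow> real list" where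
  "actl p s xs = [s 0 * xs ! p 0, s 1 * xs ! p 1, s 2 * xs ! p 2, s 3 * xs ! p 3]"

definition base :: "nat \<Rightarrow> real list" where
  "base k = (if k = 0 then [2,0,0,0] else if k = 1 then [1,1,1,1] else [tau, 1, tau - 1, 0])"

definition Ev :: "(nat \<Rightarrow> nat) set" where "Ev = {p. p permutes {..<4} \<and> evenperm p}"
definition sgs :: "(nat \<Rightarrow> real) \<Rightarrow> bool" where "sgs s \<longleftrightarrow> (\<forall>i. s i = 1 \<or> s i = -1)"

definition nv :: "nat \<Rightarrow> (nat \<Rightarrow> nat) \<Rightarrow> (nat \<Rightarrow> real) \<Rightarrow> real^5" where
  "nv k p s = mk cc (actl p s (base k))"

lemma actl_nth: "i < 4 \<Longrightarrow> actl p s xs ! i = s i * xs ! p i"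
  by (auto simp: actl_def less_Suc_eq numeral_eq_Suc)

lemma length_actl [simp]: "length (actl p s xs) = 4" by (simp add: actl_def)

lemma list4_eqI: "length xs = 4 \<Longrightarrow> length ys = 4 \<Longrightarrow> (\<And>i. i < 4 \<Longrightarrow> xs ! i = ys ! i) \<Longrightarrow> xs = ys"
  by (metis nth_equalityI)

lemma permutes4_lt: "p permutes {..<4} \<Longrightarrow> i < 4 \<Longrightarrow> p i < 4"
  using permutes_in_image by fastforce

lemma actl_comp: "p permutes {..<4} \<Longrightarrow> actl p s (actl q t xs) = actl (q \<circ> p) (\<lambda>i. s i * t (p i)) xs"
  by (rule list4_eqI) (auto simp: actl_nth permutes4_lt)

lemma perm4: "p permutes {..<(4::nat)} \<Longrightarrow> permutation p"
  unfolding permutation_permutes using finite_lessThan by blast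

lemma Ev_permutation: "p \<in> Ev \<Longrightarrow> permutation p"
  unfolding Ev_def using perm4 by blast

lemma permute_nth': "i < length xs \<Longrightarrow> permute_list q xs ! i = xs ! q i"
  by (simp add: permute_list_def)

lemma permute4_nth: "q permutes {..<4} \<Longrightarrow> i < 4 \<Longrightarrow> permute_list q [a,b,c,d] ! i = [a,b,c,d] ! q i"
  by (rule permute_nth') simp

lemma id_Ev: "id \<in> Ev" unfolding Ev_def by (simp add: permutes_id)

lemma Ev_comp: assumes "p \<in> Ev" "q \<in> Ev" shows "q \<circ> p \<in> Ev"
proof -
  have p: "p permutes {..<4}" "evenperm p" and q: "q permutes {..<4}" "evenperm q"
    using assms unfolding Ev_def by auto
  have "evenperm (q \<circ> p) = (evenperm q = evenperm p)" by (rule evenperm_comp[OF perm4[OF q(1)] perm4[OF p(1)]])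
  then show ?thesis unfolding Ev_def using permutes_compose[OF p(1) q(1)] p(2) q(2) by simp
qed

lemma Ev_inv: assumes "p \<in> Ev" shows "inv p \<in> Ev"
proof -
  have p: "p permutes {..<4}" "evenperm p" using assms unfolding Ev_def by auto
  show ?thesis unfolding Ev_def using permutes_inv[OF p(1)] evenperm_inv[OF perm4[OF p(1)]] p(2) by simp
qed

lemma div_tau: "x / tau = x * (tau - 1)"
proof -
  have "x / tau = x * (1 / tau)" by simp
  also have "\<dots> = x * (tau - 1)" by (simp only: tau_inv)
  finally show ?thesis .
qed

lemma lt4_cases: "(i::nat) < 4 \<Longrightarrow> i = 0 \<or> i = 1 \<or> i = 2 \<or> i = 3" by arith

lemma typeA_sub:
  assumes s: "s \<in> {-1,1}" and m: "mset xs = mset [s*2,0,0,0::real]"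
  shows "\<exists>p s'. p \<in> Ev \<and> sgs s' \<and> xs = actl p s' (base 0)"
proof -
  obtain q where q0: "q permutes {..<length [s*2,0,0,0::real]}" and xq: "permute_list q [s*2,0,0,0] = xs"
    using mset_eq_permutation[OF m] by blast
  have q: "q permutes {..<4}" using q0 by (simp add: numeral_eq_Suc)
  define p where "p = (if evenperm q then q else Transposition.transpose 1 2 \<circ> q)"
  have pq: "p permutes {..<4}"
    unfolding p_def using q permutes_compose[OF q permutes_swap_id[of 1 "{..<4}" 2]] by simp
  have pe: "evenperm p"
  proof (cases "evenperm q")
    case True then show ?thesis unfolding p_def by simp
  next
    case False
    have "evenperm (Transposition.transpose (1::nat) 2 \<circ> q) = (evenperm (Transposition.transpose (1::nat) 2) = evenperm q)"
      by (rule evenperm_comp[OF permutation_swap_id perm4[OF q]])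
    then show ?thesis using False unfolding p_def by (simp add: evenperm_swap)
  qed
  have "xs = actl p (\<lambda>_. s) (base 0)"
  proof (rule list4_eqI)
    show "length xs = 4" using xq[symmetric] by simp
    fix i :: nat assume i: "i < 4"
    have qi: "q i < 4" using permutes4_lt[OF q i] .
    have "xs ! i = [s*2,0,0,0] ! q i" using xq permute4_nth[OF q i] by auto
    moreover have "actl p (\<lambda>_. s) (base 0) ! i = s * [2,0,0,0] ! p i"
      using i by (simp add: actl_nth base_def)
    moreover have "[s*2,0,0,0] ! q i = s * [2,0,0,0] ! p i"
    proof (cases "evenperm q")
      case True then show ?thesis using lt4_cases[OF qi] unfolding p_def by auto
    next
      case False then show ?thesis using lt4_cases[OF qi] unfolding p_def
        by (auto simp: Transposition.transpose_def)
    qed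
    ultimately show "xs ! i = actl p (\<lambda>_. s) (base 0) ! i" by simp
  qed simp
  moreover have "sgs (\<lambda>_. s)" using s unfolding sgs_def by auto
  moreover have "p \<in> Ev" using pq pe unfolding Ev_def by simp
  ultimately show ?thesis by blast
qed

lemma typeB_sub:
  assumes "a \<in> {-1,1}" "b \<in> {-1,1}" "c \<in> {-1,1}" "d \<in> {-1,1::real}"
  shows "\<exists>p s'. p \<in> Ev \<and> sgs s' \<and> [a,b,c,d] = actl p s' (base 1)"
proof -
  define s where "s = (\<lambda>i::nat. if i = 0 then a else if i = 1 then b else if i = 2 then c else if i = 3 then d else 1)"
  have "sgs s" using assms unfolding sgs_def s_def by auto
  moreover have "[a,b,c,d] = actl id s (base 1)" by (simp add: actl_def base_def s_def)
  ultimately show ?thesis using id_Ev by blast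
qed

lemma typeC_sub:
  assumes q: "q \<in> Ev" and s: "s1 \<in> {-1,1}" "s2 \<in> {-1,1}" "s3 \<in> {-1,1::real}"
  shows "\<exists>p s'. p \<in> Ev \<and> sgs s' \<and> permute_list q [s1*tau, s2, s3/tau, 0] = actl p s' (base 2)"
proof -
  define u where "u = (\<lambda>j::nat. if j = 0 then s1 else if j = 1 then s2 else if j = 2 then s3 else 1)"
  have qp: "q permutes {..<4}" using q unfolding Ev_def by auto
  have "sgs (\<lambda>i. u (q i))" using s unfolding sgs_def u_def by auto
  moreover have "permute_list q [s1*tau, s2, s3/tau, 0] = actl q (\<lambda>i. u (q i)) (base 2)"
  proof (rule list4_eqI)
    fix i :: nat assume i: "i < 4"
    have qi: "q i < 4" using permutes4_lt[OF qp i] .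
    have "permute_list q [s1*tau, s2, s3/tau, 0] ! i = [s1*tau, s2, s3/tau, 0] ! q i"
      by (rule permute4_nth[OF qp i])
    also have "\<dots> = u (q i) * base 2 ! q i"
      using lt4_cases[OF qi] unfolding u_def base_def
      by (auto simp: div_tau)
    also have "\<dots> = actl q (\<lambda>i. u (q i)) (base 2) ! i" using i by (simp add: actl_nth)
    finally show "permute_list q [s1*tau, s2, s3/tau, 0] ! i = actl q (\<lambda>i. u (q i)) (base 2) ! i" .
  qed simp_all
  ultimately show ?thesis using q by blast
qed

lemma typeA_sup:
  assumes p: "p \<in> Ev" and s: "sgs s"
  shows "\<exists>\<sigma>. \<sigma> \<in> {-1,1} \<and> mset (actl p s (base 0)) = mset [\<sigma>*2,0,0,0]"
proof -
  have pp: "p permutes {..<4}" using p unfolding Ev_def by auto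
  define \<sigma> where "\<sigma> = s (inv p 0)"
  have "actl p s (base 0) = permute_list p [\<sigma>*2,0,0,0]"
  proof (rule list4_eqI)
    fix i :: nat assume i: "i < 4"
    have pi: "p i < 4" using permutes4_lt[OF pp i] .
    have inv: "inv p (p i) = i" using permutes_inverses(2)[OF pp] by simp
    have "permute_list p [\<sigma>*2,0,0,0] ! i = [\<sigma>*2,0,0,0] ! p i"
      by (rule permute4_nth[OF pp i])
    also have "\<dots> = s i * base 0 ! p i"
      using lt4_cases[OF pi] inv unfolding \<sigma>_def base_def by auto
    finally show "actl p s (base 0) ! i = permute_list p [\<sigma>*2,0,0,0] ! i"
      using i by (simp add: actl_nth)
  qed simp_all
  moreover have "p permutes {..<length [\<sigma>*2,0,0,0::real]}" using pp by (simp add: numeral_eq_Suc)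
  ultimately have "mset (actl p s (base 0)) = mset [\<sigma>*2,0,0,0]"
    using mset_permute_list by metis
  moreover have "\<sigma> \<in> {-1,1}" using s unfolding sgs_def \<sigma>_def by auto
  ultimately show ?thesis by blast
qed

lemma typeC_sup:
  assumes p: "p \<in> Ev" and s: "sgs s"
  shows "\<exists>u1 u2 u3. u1 \<in> {-1,1} \<and> u2 \<in> {-1,1} \<and> u3 \<in> {-1,1} \<and>
     actl p s (base 2) = permute_list p [u1*tau, u2, u3/tau, 0]"
proof -
  have pp: "p permutes {..<4}" using p unfolding Ev_def by auto
  define u where "u = (\<lambda>j. s (inv p j))"
  have "actl p s (base 2) = permute_list p [u 0*tau, u 1, u 2/tau, 0]"
  proof (rule list4_eqI)
    fix i :: nat assume i: "i < 4"
    have pi: "p i < 4" using permutes4_lt[OF pp i] .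
    have inv: "inv p (p i) = i" using permutes_inverses(2)[OF pp] by simp
    have "permute_list p [u 0*tau, u 1, u 2/tau, 0] ! i = [u 0*tau, u 1, u 2/tau, 0] ! p i"
      by (rule permute4_nth[OF pp i])
    also have "\<dots> = s i * base 2 ! p i"
      using lt4_cases[OF pi] inv unfolding u_def base_def
      by (auto simp: div_tau)
    finally show "actl p s (base 2) ! i = permute_list p [u 0*tau, u 1, u 2/tau, 0] ! i"
      using i by (simp add: actl_nth)
  qed simp_all
  moreover have "u 0 \<in> {-1,1}" "u 1 \<in> {-1,1}" "u 2 \<in> {-1,1}" using s unfolding sgs_def u_def by auto
  ultimately show ?thesis by blast
qed

lemma normals_iff: "n \<in> normals \<longleftrightarrow>
   (\<exists>xs s. n = mk (sqrt (2*tau)) xs \<and> s \<in> {-1,1} \<and> mset xs = mset [s*2,0,0,0]) \<or>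
   (\<exists>a b c d. n = mk (sqrt (2*tau)) [a,b,c,d] \<and> a \<in> {-1,1} \<and> b \<in> {-1,1} \<and> c \<in> {-1,1} \<and> d \<in> {-1,1}) \<or>
   (\<exists>q s1 s2 s3. n = mk (sqrt (2*tau)) (permute_list q [s1*tau, s2, s3/tau, 0]) \<and>
          q permutes {..<4} \<and> evenperm q \<and> s1 \<in> {-1,1} \<and> s2 \<in> {-1,1} \<and> s3 \<in> {-1,1})"
  unfolding normals_def by (simp only: Un_iff mem_Collect_eq disj_assoc)

lemma nv_mem: "k < 3 \<Longrightarrow> p \<in> Ev \<Longrightarrow> sgs s \<Longrightarrow> nv k p s \<in> {nv k p s | k p s. k < 3 \<and> p \<in> Ev \<and> sgs s}"
  by blast

theorem normals_param: "normals = {nv k p s | k p s. k < 3 \<and> p \<in> Ev \<and> sgs s}"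
proof (rule set_eqI, rule iffI)
  fix n assume "n \<in> normals"
  then have "(\<exists>xs s. n = mk (sqrt (2*tau)) xs \<and> s \<in> {-1,1} \<and> mset xs = mset [s*2,0,0,0]) \<or>
   (\<exists>a b c d. n = mk (sqrt (2*tau)) [a,b,c,d] \<and> a \<in> {-1,1} \<and> b \<in> {-1,1} \<and> c \<in> {-1,1} \<and> d \<in> {-1,1}) \<or>
   (\<exists>q s1 s2 s3. n = mk (sqrt (2*tau)) (permute_list q [s1*tau, s2, s3/tau, 0]) \<and>
          q permutes {..<4} \<and> evenperm q \<and> s1 \<in> {-1,1} \<and> s2 \<in> {-1,1} \<and> s3 \<in> {-1,1})"
    unfolding normals_iff .
  then show "n \<in> {nv k p s | k p s. k < 3 \<and> p \<in> Ev \<and> sgs s}"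
  proof (elim disjE exE conjE)
    fix xs s assume A: "n = mk (sqrt (2*tau)) xs" "s \<in> {-1,1}" "mset xs = mset [s*2,0,0,0]"
    then obtain p s' where ps: "p \<in> Ev" "sgs s'" "xs = actl p s' (base 0)" using typeA_sub by metis
    have "n = nv 0 p s'" using A(1) ps(3) unfolding nv_def cc_def by simp
    then show ?thesis using nv_mem[of 0 p s'] ps(1,2) by simp
  next
    fix a b c d assume B: "n = mk (sqrt (2*tau)) [a,b,c,d]" "a \<in> {-1,1}" "b \<in> {-1,1}" "c \<in> {-1,1}" "d \<in> {-1,1}"
    then obtain p s' where ps: "p \<in> Ev" "sgs s'" "[a,b,c,d] = actl p s' (base 1)" using typeB_sub by metis
    have "n = nv 1 p s'" using B(1) ps(3) unfolding nv_def cc_def by simp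
    then show ?thesis using nv_mem[of 1 p s'] ps(1,2) by simp
  next
    fix q s1 s2 s3 assume C: "n = mk (sqrt (2*tau)) (permute_list q [s1*tau, s2, s3/tau, 0])"
          "q permutes {..<4}" "evenperm q" "s1 \<in> {-1,1}" "s2 \<in> {-1,1}" "s3 \<in> {-1,1}"
    then have "q \<in> Ev" unfolding Ev_def by auto
    then obtain p s' where ps: "p \<in> Ev" "sgs s'" "permute_list q [s1*tau, s2, s3/tau, 0] = actl p s' (base 2)"
      using typeC_sub C(4,5,6) by metis
    have "n = nv 2 p s'" using C(1) ps(3) unfolding nv_def cc_def by simp
    then show ?thesis using nv_mem[of 2 p s'] ps(1,2) by simp
  qed
next
  fix n assume "n \<in> {nv k p s | k p s. k < 3 \<and> p \<in> Ev \<and> sgs s}"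
  then obtain k p s where n: "n = nv k p s" and k: "k < 3" and p: "p \<in> Ev" and s: "sgs s" by blast
  from k have "k = 0 \<or> k = 1 \<or> k = 2" by arith
  then show "n \<in> normals"
  proof (elim disjE)
    assume k0: "k = 0"
    obtain \<sigma> where sg: "\<sigma> \<in> {-1,1}" "mset (actl p s (base 0)) = mset [\<sigma>*2,0,0,0]"
      using typeA_sup[OF p s] by blast
    have nn: "n = mk (sqrt (2*tau)) (actl p s (base 0))" using n k0 unfolding nv_def cc_def by simp
    have "\<exists>xs s. n = mk (sqrt (2*tau)) xs \<and> s \<in> {-1,1} \<and> mset xs = mset [s*2,0,0,0]"
      using nn sg by blast
    then show ?thesis unfolding normals_iff by (rule disjI1)
  next
    assume k1: "k = 1"
    have pp: "p permutes {..<4}" using p unfolding Ev_def by auto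
    have b1: "base 1 ! p i = 1" if "i < 4" for i
    proof -
      have "p i < 4" by (rule permutes4_lt[OF pp that])
      then show ?thesis using lt4_cases[of "p i"] by (auto simp: base_def)
    qed
    have "actl p s (base 1) = [s 0, s 1, s 2, s 3]" unfolding actl_def using b1[of 0] b1[of 1] b1[of 2] b1[of 3] by simp
    then have nn: "n = mk (sqrt (2*tau)) [s 0, s 1, s 2, s 3]" using n k1 unfolding nv_def cc_def by simp
    have ss: "s 0 \<in> {-1,1}" "s 1 \<in> {-1,1}" "s 2 \<in> {-1,1}" "s 3 \<in> {-1,1}"
      using s unfolding sgs_def by auto
    show ?thesis unfolding normals_iff
      by (rule disjI2, rule disjI1, rule exI[of _ "s 0"], rule exI[of _ "s 1"], rule exI[of _ "s 2"],
          rule exI[of _ "s 3"]) (simp only: nn ss simp_thms)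
  next
    assume k2: "k = 2"
    obtain u1 u2 u3 where us: "u1 \<in> {-1,1}" "u2 \<in> {-1,1}" "u3 \<in> {-1,1}"
      "actl p s (base 2) = permute_list p [u1*tau, u2, u3/tau, 0]"
      using typeC_sup[OF p s] by blast
    have pe: "p permutes {..<4}" "evenperm p" using p unfolding Ev_def by auto
    have nn: "n = mk (sqrt (2*tau)) (permute_list p [u1*tau, u2, u3/tau, 0])" using n k2 us(4) unfolding nv_def cc_def by simp
    show ?thesis unfolding normals_iff
      by (rule disjI2, rule disjI2, rule exI[of _ p], rule exI[of _ u1], rule exI[of _ u2],
          rule exI[of _ u3]) (simp only: nn us pe simp_thms)
  qed
qed

section \<open>Symmetries\<close>

definition sp :: "real^5 \<Rightarrow> real list" where "sp x = [x$2, x$3, x$4, x$5]"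

definition gact :: "(nat \<Rightarrow> nat) \<Rightarrow> (nat \<Rightarrow> real) \<Rightarrow> real^5 \<Rightarrow> real^5" where
  "gact p s x = mk (x$1) (actl p s (sp x))"

definition rep :: "nat \<Rightarrow> real^5" where "rep k = nv k id (\<lambda>_. 1)"

lemma sp_mk: "length xs = 4 \<Longrightarrow> sp (mk a xs) = xs"
  unfolding sp_def by (rule list4_eqI) (auto dest!: lt4_cases)

lemma Ev_permutes: "p \<in> Ev \<Longrightarrow> p permutes {..<4}" unfolding Ev_def by auto

lemma gact_nv: assumes "p \<in> Ev" shows "gact p s (nv k q t) = nv k (q \<circ> p) (\<lambda>i. s i * t (p i))"
  unfolding gact_def nv_def using actl_comp[OF Ev_permutes[OF assms]] by (simp add: sp_mk)

lemma sgs_mult: "sgs s \<Longrightarrow> sgs t \<Longrightarrow> sgs (\<lambda>i. s i * t (p i))"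
  unfolding sgs_def by (metis mult_1_left mult_1_right mult_minus_left mult_minus_right minus_minus)

lemma gact_normals: assumes p: "p \<in> Ev" and s: "sgs s" and n: "n \<in> normals" shows "gact p s n \<in> normals"
proof -
  obtain k q t where "n = nv k q t" "k < 3" "q \<in> Ev" "sgs t" using n unfolding normals_param by blast
  then show ?thesis unfolding normals_param using gact_nv[OF p] Ev_comp[OF p] sgs_mult[OF s] by blast
qed

lemma gact_rep: "p \<in> Ev \<Longrightarrow> gact p s (rep k) = nv k p s"
  unfolding rep_def by (simp add: gact_nv)

lemma normals_rep: "n \<in> normals \<Longrightarrow> \<exists>k p s. k < 3 \<and> p \<in> Ev \<and> sgs s \<and> n = gact p s (rep k)"
  unfolding normals_param using gact_rep by fastforce

lemma rep_normals: "k < 3 \<Longrightarrow> rep k \<in> normals"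
  unfolding normals_param rep_def using id_Ev by (auto simp: sgs_def)

lemma sum4: "(\<Sum>i<4. f i) = f 0 + f 1 + f 2 + f (3::nat)"
  by (simp add: numeral_eq_Suc)

lemma mink_sp: "mink x y = - (x$1 * y$1) + (\<Sum>i<4. sp x ! i * sp y ! i)"
  by (simp add: mink_def sp_def sum4)

lemma mink_gact: assumes p: "p permutes {..<4}" and s: "sgs s"
  shows "mink (gact p s x) (gact p s y) = mink x y"
proof -
  have ss: "s i * s i = 1" for i using s unfolding sgs_def by (metis mult_1_left mult_minus1_right minus_minus)
  have "(\<Sum>i<4. actl p s (sp x) ! i * actl p s (sp y) ! i) = (\<Sum>i<4. (\<lambda>j. sp x ! j * sp y ! j) (p i))"
    by (rule sum.cong) (auto simp: actl_nth ss algebra_simps)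
  also have "\<dots> = (\<Sum>i<4. sp x ! i * sp y ! i)"
    using sum.permute[OF p, of "\<lambda>j. sp x ! j * sp y ! j"] by (simp add: comp_def)
  finally show ?thesis unfolding gact_def mink_sp[of "mk _ _"] mink_sp[of x y]
    by (simp add: sp_mk)
qed

lemma gact_inv: assumes p: "p permutes {..<4}" and s: "sgs s"
  shows "gact (inv p) (\<lambda>i. s (inv p i)) (gact p s x) = x"
proof -
  have ss: "s i * s i = 1" for i using s unfolding sgs_def by (metis mult_1_left mult_minus1_right minus_minus)
  have "actl (inv p) (\<lambda>i. s (inv p i)) (actl p s (sp x)) = sp x"
  proof (rule list4_eqI)
    fix i :: nat assume i: "i < 4"
    have ii: "inv p i < 4" using permutes4_lt[OF permutes_inv[OF p] i] .
    have pi: "p (inv p i) = i" using permutes_inverses(1)[OF p] by simp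
    show "actl (inv p) (\<lambda>i. s (inv p i)) (actl p s (sp x)) ! i = sp x ! i"
      using i ii pi by (simp add: actl_nth mult.assoc[symmetric] ss)
  qed (simp_all add: sp_def)
  then show ?thesis unfolding gact_def mk_comp(1) sp_mk[OF length_actl] by (simp add: vec5_eq sp_def)
qed

lemma gact_inv2: assumes p: "p permutes {..<4}" and s: "sgs s"
  shows "gact p s (gact (inv p) (\<lambda>i. s (inv p i)) x) = x"
proof -
  have ip: "inv p permutes {..<4}" using permutes_inv[OF p] .
  have s': "sgs (\<lambda>i. s (inv p i))" using s unfolding sgs_def by auto
  have "inv (inv p) = p" using p by (simp add: permutes_inv_inv)
  moreover have "(\<lambda>i. s (inv p (inv (inv p) i))) = s"
    using calculation permutes_inverses(2)[OF p] by auto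
  ultimately show ?thesis using gact_inv[OF ip s', of x] by simp
qed

lemma sgs_inv: "sgs s \<Longrightarrow> sgs (\<lambda>i. s (inv p i))" unfolding sgs_def by auto

type_synonym zt = "int \<times> int"
fun zm :: "zt \<Rightarrow> zt \<Rightarrow> zt" where "zm (a,b) (c,d) = (a*c+b*d, a*d+b*c+b*d)"
fun za :: "zt \<Rightarrow> zt \<Rightarrow> zt" where "za (a,b) (c,d) = (a+c, b+d)"
fun zs :: "int \<Rightarrow> zt \<Rightarrow> zt" where "zs s (a,b) = (s*a, s*b)"
fun zr :: "zt \<Rightarrow> real" where "zr (a,b) = of_int a + of_int b * tau"

lemma tau_mult: "(a + b*tau)*(c + d*tau) = (a*c + b*d) + (a*d+b*c+b*d)*tau"
proof -
  have "(a + b*tau)*(c + d*tau) = a*c + (a*d+b*c)*tau + b*d*(tau*tau)" by (simp add: algebra_simps)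
  also have "b*d*(tau*tau) = b*d*(tau+1)" by (simp only: tau_sq)
  finally show ?thesis by (simp add: algebra_simps)
qed

lemma zr_zm: "zr (zm x y) = zr x * zr y"
proof -
  obtain a b c d where xy: "x = (a,b)" "y = (c,d)" by fastforce
  show ?thesis unfolding xy using tau_mult[of "of_int a" "of_int b" "of_int c" "of_int d"] by simp
qed

lemma zr_za: "zr (za x y) = zr x + zr y"
  by (cases x, cases y) (simp add: algebra_simps)

lemma zr_zs: "zr (zs s x) = of_int s * zr x"
  by (cases x) (simp add: algebra_simps)

definition dt :: "zt list \<Rightarrow> zt list \<Rightarrow> zt" where
  "dt xs ys = za (za (zm (xs!0) (ys!0)) (zm (xs!1) (ys!1))) (za (zm (xs!2) (ys!2)) (zm (xs!3) (ys!3)))"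
definition actI :: "nat list \<Rightarrow> int list \<Rightarrow> zt list \<Rightarrow> zt list" where
  "actI t s xs = [zs (s!0) (xs!(t!0)), zs (s!1) (xs!(t!1)), zs (s!2) (xs!(t!2)), zs (s!3) (xs!(t!3))]"
definition baseI :: "nat \<Rightarrow> zt list" where
  "baseI k = (if k = 0 then [(2,0),(0,0),(0,0),(0,0)] else if k = 1 then [(1,0),(1,0),(1,0),(1,0)] else [(0,1),(1,0),(-1,1),(0,0)])"
definition E12 :: "nat list list" where "E12 = [[0, 1, 2, 3], [0, 2, 3, 1], [0, 3, 1, 2], [1, 0, 3, 2], [1, 2, 0, 3], [1, 3, 2, 0], [2, 0, 1, 3], [2, 1, 3, 0], [2, 3, 0, 1], [3, 0, 2, 1], [3, 1, 0, 2], [3, 2, 1, 0]]"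
definition SG16 :: "int list list" where "SG16 = [[1, 1, 1, 1], [1, 1, 1, -1], [1, 1, -1, 1], [1, 1, -1, -1], [1, -1, 1, 1], [1, -1, 1, -1], [1, -1, -1, 1], [1, -1, -1, -1], [-1, 1, 1, 1], [-1, 1, 1, -1], [-1, 1, -1, 1], [-1, 1, -1, -1], [-1, -1, 1, 1], [-1, -1, 1, -1], [-1, -1, -1, 1], [-1, -1, -1, -1]]"
definition NbP0 :: "(nat * nat list * int list) list" where "NbP0 = [(2, [0, 1, 2, 3], [1, 1, 1, 1]), (2, [0, 1, 2, 3], [1, 1, -1, 1]), (2, [0, 1, 2, 3], [1, -1, 1, 1]), (2, [0, 1, 2, 3], [1, -1, -1, 1]), (2, [0, 2, 3, 1], [1, 1, 1, 1]), (2, [0, 2, 3, 1], [1, 1, 1, -1]), (2, [0, 2, 3, 1], [1, -1, 1, 1]), (2, [0, 2, 3, 1], [1, -1, 1, -1]), (2, [0, 3, 1, 2], [1, 1, 1, 1]), (2, [0, 3, 1, 2], [1, 1, 1, -1]), (2, [0, 3, 1, 2], [1, 1, -1, 1]), (2, [0, 3, 1, 2], [1, 1, -1, -1])]"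
definition NbP1 :: "(nat * nat list * int list) list" where "NbP1 = [(2, [0, 1, 2, 3], [1, 1, 1, 1]), (2, [0, 2, 3, 1], [1, 1, 1, 1]), (2, [0, 3, 1, 2], [1, 1, 1, 1]), (2, [1, 0, 3, 2], [1, 1, 1, 1]), (2, [1, 2, 0, 3], [1, 1, 1, 1]), (2, [1, 3, 2, 0], [1, 1, 1, 1]), (2, [2, 0, 1, 3], [1, 1, 1, 1]), (2, [2, 1, 3, 0], [1, 1, 1, 1]), (2, [2, 3, 0, 1], [1, 1, 1, 1]), (2, [3, 0, 2, 1], [1, 1, 1, 1]), (2, [3, 1, 0, 2], [1, 1, 1, 1]), (2, [3, 2, 1, 0], [1, 1, 1, 1])]"
definition NbP2 :: "(nat * nat list * int list) list" where "NbP2 = [(0, [0, 1, 2, 3], [1, 1, 1, 1]), (1, [0, 1, 2, 3], [1, 1, 1, 1]), (1, [0, 1, 2, 3], [1, 1, 1, -1]), (2, [0, 1, 2, 3], [1, 1, -1, 1]), (2, [0, 2, 3, 1], [1, 1, 1, 1]), (2, [0, 2, 3, 1], [1, 1, 1, -1]), (2, [0, 3, 1, 2], [1, 1, 1, 1]), (2, [0, 3, 1, 2], [1, 1, 1, -1]), (2, [1, 0, 3, 2], [1, 1, 1, 1]), (2, [1, 0, 3, 2], [1, 1, 1, -1]), (2, [1, 2, 0, 3], [1, 1, 1, 1]), (2, [2, 0, 1, 3], [1, 1, 1, 1])]"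
definition NLgen :: "zt list list" where
  "NLgen = concat (map (\<lambda>k. concat (map (\<lambda>t. map (\<lambda>s. actI t s (baseI k)) SG16) E12)) [0,1,2])"

definition conv :: "zt list \<Rightarrow> real^5" where
  "conv xs = mk cc [zr (xs!0), zr (xs!1), zr (xs!2), zr (xs!3)]"

lemma mink_conv: "mink (conv xs) (conv ys) = - 2 * tau + zr (dt xs ys)"
  unfolding conv_def mink_mk dt_def by (simp add: zr_za zr_zm cc_sq)

lemma baseI_zr: assumes "i < 4" shows "zr (baseI k ! i) = base k ! i"
proof -
  consider "k = 0" | "k = 1" | "k \<noteq> 0" "k \<noteq> 1" by blast
  then show ?thesis
    by cases (use lt4_cases[OF assms] in \<open>auto simp: baseI_def base_def\<close>)
qed

lemma perm4_eq:
  assumes p: "p permutes {..<(4::nat)}" and q: "q permutes {..<4}"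
    and "p 0 = q 0" "p 1 = q 1" "p 2 = q 2" "p 3 = q 3"
  shows "p = q"
proof
  fix i show "p i = q i"
  proof (cases "i < 4")
    case True then show ?thesis using lt4_cases[OF True] assms(3-6) by auto
  next
    case False then show ?thesis using permutes_not_in[OF p] permutes_not_in[OF q] by simp
  qed
qed

lemma perm4_vals: assumes "p permutes {..<(4::nat)}" shows "(p 0, p 1, p 2, p 3) \<in> {(0,1,2,3), (0,1,3,2), (0,2,1,3), (0,2,3,1), (0,3,1,2), (0,3,2,1), (1,0,2,3), (1,0,3,2), (1,2,0,3), (1,2,3,0), (1,3,0,2), (1,3,2,0), (2,0,1,3), (2,0,3,1), (2,1,0,3), (2,1,3,0), (2,3,0,1), (2,3,1,0), (3,0,1,2), (3,0,2,1), (3,1,0,2), (3,1,2,0), (3,2,0,1), (3,2,1,0)}"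
proof -
  have lt: "p 0 < 4" "p 1 < 4" "p 2 < 4" "p 3 < 4" using permutes4_lt[OF assms] by auto
  have inj: "p 0 \<noteq> p 1" "p 0 \<noteq> p 2" "p 0 \<noteq> p 3" "p 1 \<noteq> p 2" "p 1 \<noteq> p 3" "p 2 \<noteq> p 3"
    using inj_eq[OF permutes_inj[OF assms]] by simp_all
  show ?thesis using lt4_cases[OF lt(1)] lt4_cases[OF lt(2)] lt4_cases[OF lt(3)] lt4_cases[OF lt(4)] inj
    by (elim disjE) simp_all
qed

lemma E12_complete: assumes "p \<in> Ev" shows "[p 0, p 1, p 2, p 3] \<in> set E12"
proof -
  have pp: "p permutes {..<4}" and pe: "evenperm p" using assms unfolding Ev_def by auto
  have "(p 0, p 1, p 2, p 3) \<in> {(0,1,2,3), (0,1,3,2), (0,2,1,3), (0,2,3,1), (0,3,1,2), (0,3,2,1), (1,0,2,3), (1,0,3,2), (1,2,0,3), (1,2,3,0), (1,3,0,2), (1,3,2,0), (2,0,1,3), (2,0,3,1), (2,1,0,3), (2,1,3,0), (2,3,0,1), (2,3,1,0), (3,0,1,2), (3,0,2,1), (3,1,0,2), (3,1,2,0), (3,2,0,1), (3,2,1,0)}" by (rule perm4_vals[OF pp])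
  then show ?thesis
  proof (elim insertE)
    assume h: "(p 0, p 1, p 2, p 3) = (0,1,2,3)"
    then show ?thesis by (simp add: E12_def)
  next
    assume h: "(p 0, p 1, p 2, p 3) = (0,1,3,2)"
    have "p = (Transposition.transpose 3 2)" by (rule perm4_eq[OF pp]) (use h in \<open>auto intro!: permutes_compose permutes_swap_id simp: Transposition.transpose_def\<close>)
    then have "\<not> evenperm p" by (simp add: evenperm_comp permutation_compose permutation_swap_id evenperm_swap)
    then show ?thesis using pe by simp
  next
    assume h: "(p 0, p 1, p 2, p 3) = (0,2,1,3)"
    have "p = (Transposition.transpose 2 1)" by (rule perm4_eq[OF pp]) (use h in \<open>auto intro!: permutes_compose permutes_swap_id simp: Transposition.transpose_def\<close>)
    then have "\<not> evenperm p" by (simp add: evenperm_comp permutation_compose permutation_swap_id evenperm_swap)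
    then show ?thesis using pe by simp
  next
    assume h: "(p 0, p 1, p 2, p 3) = (0,2,3,1)"
    then show ?thesis by (simp add: E12_def)
  next
    assume h: "(p 0, p 1, p 2, p 3) = (0,3,1,2)"
    then show ?thesis by (simp add: E12_def)
  next
    assume h: "(p 0, p 1, p 2, p 3) = (0,3,2,1)"
    have "p = (Transposition.transpose 3 1)" by (rule perm4_eq[OF pp]) (use h in \<open>auto intro!: permutes_compose permutes_swap_id simp: Transposition.transpose_def\<close>)
    then have "\<not> evenperm p" by (simp add: evenperm_comp permutation_compose permutation_swap_id evenperm_swap)
    then show ?thesis using pe by simp
  next
    assume h: "(p 0, p 1, p 2, p 3) = (1,0,2,3)"
    have "p = (Transposition.transpose 1 0)" by (rule perm4_eq[OF pp]) (use h in \<open>auto intro!: permutes_compose permutes_swap_id simp: Transposition.transpose_def\<close>)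
    then have "\<not> evenperm p" by (simp add: evenperm_comp permutation_compose permutation_swap_id evenperm_swap)
    then show ?thesis using pe by simp
  next
    assume h: "(p 0, p 1, p 2, p 3) = (1,0,3,2)"
    then show ?thesis by (simp add: E12_def)
  next
    assume h: "(p 0, p 1, p 2, p 3) = (1,2,0,3)"
    then show ?thesis by (simp add: E12_def)
  next
    assume h: "(p 0, p 1, p 2, p 3) = (1,2,3,0)"
    have "p = (Transposition.transpose 3 0 \<circ> Transposition.transpose 2 0 \<circ> Transposition.transpose 1 0)" by (rule perm4_eq[OF pp]) (use h in \<open>auto intro!: permutes_compose permutes_swap_id simp: Transposition.transpose_def\<close>)
    then have "\<not> evenperm p" by (simp add: evenperm_comp permutation_compose permutation_swap_id evenperm_swap)
    then show ?thesis using pe by simp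
  next
    assume h: "(p 0, p 1, p 2, p 3) = (1,3,0,2)"
    have "p = (Transposition.transpose 3 2 \<circ> Transposition.transpose 2 0 \<circ> Transposition.transpose 1 0)" by (rule perm4_eq[OF pp]) (use h in \<open>auto intro!: permutes_compose permutes_swap_id simp: Transposition.transpose_def\<close>)
    then have "\<not> evenperm p" by (simp add: evenperm_comp permutation_compose permutation_swap_id evenperm_swap)
    then show ?thesis using pe by simp
  next
    assume h: "(p 0, p 1, p 2, p 3) = (1,3,2,0)"
    then show ?thesis by (simp add: E12_def)
  next
    assume h: "(p 0, p 1, p 2, p 3) = (2,0,1,3)"
    then show ?thesis by (simp add: E12_def)
  next
    assume h: "(p 0, p 1, p 2, p 3) = (2,0,3,1)"
    have "p = (Transposition.transpose 3 1 \<circ> Transposition.transpose 2 1 \<circ> Transposition.transpose 1 0)" by (rule perm4_eq[OF pp]) (use h in \<open>auto intro!: permutes_compose permutes_swap_id simp: Transposition.transpose_def\<close>)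
    then have "\<not> evenperm p" by (simp add: evenperm_comp permutation_compose permutation_swap_id evenperm_swap)
    then show ?thesis using pe by simp
  next
    assume h: "(p 0, p 1, p 2, p 3) = (2,1,0,3)"
    have "p = (Transposition.transpose 2 0)" by (rule perm4_eq[OF pp]) (use h in \<open>auto intro!: permutes_compose permutes_swap_id simp: Transposition.transpose_def\<close>)
    then have "\<not> evenperm p" by (simp add: evenperm_comp permutation_compose permutation_swap_id evenperm_swap)
    then show ?thesis using pe by simp
  next
    assume h: "(p 0, p 1, p 2, p 3) = (2,1,3,0)"
    then show ?thesis by (simp add: E12_def)
  next
    assume h: "(p 0, p 1, p 2, p 3) = (2,3,0,1)"
    then show ?thesis by (simp add: E12_def)
  next
    assume h: "(p 0, p 1, p 2, p 3) = (2,3,1,0)"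
    have "p = (Transposition.transpose 3 0 \<circ> Transposition.transpose 2 1 \<circ> Transposition.transpose 1 0)" by (rule perm4_eq[OF pp]) (use h in \<open>auto intro!: permutes_compose permutes_swap_id simp: Transposition.transpose_def\<close>)
    then have "\<not> evenperm p" by (simp add: evenperm_comp permutation_compose permutation_swap_id evenperm_swap)
    then show ?thesis using pe by simp
  next
    assume h: "(p 0, p 1, p 2, p 3) = (3,0,1,2)"
    have "p = (Transposition.transpose 3 2 \<circ> Transposition.transpose 2 1 \<circ> Transposition.transpose 1 0)" by (rule perm4_eq[OF pp]) (use h in \<open>auto intro!: permutes_compose permutes_swap_id simp: Transposition.transpose_def\<close>)
    then have "\<not> evenperm p" by (simp add: evenperm_comp permutation_compose permutation_swap_id evenperm_swap)
    then show ?thesis using pe by simp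
  next
    assume h: "(p 0, p 1, p 2, p 3) = (3,0,2,1)"
    then show ?thesis by (simp add: E12_def)
  next
    assume h: "(p 0, p 1, p 2, p 3) = (3,1,0,2)"
    then show ?thesis by (simp add: E12_def)
  next
    assume h: "(p 0, p 1, p 2, p 3) = (3,1,2,0)"
    have "p = (Transposition.transpose 3 0)" by (rule perm4_eq[OF pp]) (use h in \<open>auto intro!: permutes_compose permutes_swap_id simp: Transposition.transpose_def\<close>)
    then have "\<not> evenperm p" by (simp add: evenperm_comp permutation_compose permutation_swap_id evenperm_swap)
    then show ?thesis using pe by simp
  next
    assume h: "(p 0, p 1, p 2, p 3) = (3,2,0,1)"
    have "p = (Transposition.transpose 3 1 \<circ> Transposition.transpose 2 0 \<circ> Transposition.transpose 1 0)" by (rule perm4_eq[OF pp]) (use h in \<open>auto intro!: permutes_compose permutes_swap_id simp: Transposition.transpose_def\<close>)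
    then have "\<not> evenperm p" by (simp add: evenperm_comp permutation_compose permutation_swap_id evenperm_swap)
    then show ?thesis using pe by simp
  next
    assume h: "(p 0, p 1, p 2, p 3) = (3,2,1,0)"
    then show ?thesis by (simp add: E12_def)
  qed simp
qed
lemma E12_sound: assumes "t \<in> set E12" shows "\<exists>p\<in>Ev. p 0 = t!0 \<and> p 1 = t!1 \<and> p 2 = t!2 \<and> p 3 = t!3"
proof -
  have "t \<in> {[0,1,2,3], [0,2,3,1], [0,3,1,2], [1,0,3,2], [1,2,0,3], [1,3,2,0], [2,0,1,3], [2,1,3,0], [2,3,0,1], [3,0,2,1], [3,1,0,2], [3,2,1,0]}" using assms by (simp add: E12_def)
  then show ?thesis
  proof (elim insertE)
    assume h: "t = [0,1,2,3]"
    have "id \<in> Ev" unfolding Ev_def by (auto intro!: permutes_compose permutes_swap_id simp: evenperm_comp permutation_compose permutation_swap_id evenperm_swap)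
    then show ?thesis using h by (intro bexI[of _ "id"]) (auto simp: Transposition.transpose_def)
  next
    assume h: "t = [0,2,3,1]"
    have "(Transposition.transpose 3 1 \<circ> Transposition.transpose 2 1) \<in> Ev" unfolding Ev_def by (auto intro!: permutes_compose permutes_swap_id simp: evenperm_comp permutation_compose permutation_swap_id evenperm_swap)
    then show ?thesis using h by (intro bexI[of _ "(Transposition.transpose 3 1 \<circ> Transposition.transpose 2 1)"]) (auto simp: Transposition.transpose_def)
  next
    assume h: "t = [0,3,1,2]"
    have "(Transposition.transpose 3 2 \<circ> Transposition.transpose 2 1) \<in> Ev" unfolding Ev_def by (auto intro!: permutes_compose permutes_swap_id simp: evenperm_comp permutation_compose permutation_swap_id evenperm_swap)
    then show ?thesis using h by (intro bexI[of _ "(Transposition.transpose 3 2 \<circ> Transposition.transpose 2 1)"]) (auto simp: Transposition.transpose_def)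
  next
    assume h: "t = [1,0,3,2]"
    have "(Transposition.transpose 3 2 \<circ> Transposition.transpose 1 0) \<in> Ev" unfolding Ev_def by (auto intro!: permutes_compose permutes_swap_id simp: evenperm_comp permutation_compose permutation_swap_id evenperm_swap)
    then show ?thesis using h by (intro bexI[of _ "(Transposition.transpose 3 2 \<circ> Transposition.transpose 1 0)"]) (auto simp: Transposition.transpose_def)
  next
    assume h: "t = [1,2,0,3]"
    have "(Transposition.transpose 2 0 \<circ> Transposition.transpose 1 0) \<in> Ev" unfolding Ev_def by (auto intro!: permutes_compose permutes_swap_id simp: evenperm_comp permutation_compose permutation_swap_id evenperm_swap)
    then show ?thesis using h by (intro bexI[of _ "(Transposition.transpose 2 0 \<circ> Transposition.transpose 1 0)"]) (auto simp: Transposition.transpose_def)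
  next
    assume h: "t = [1,3,2,0]"
    have "(Transposition.transpose 3 0 \<circ> Transposition.transpose 1 0) \<in> Ev" unfolding Ev_def by (auto intro!: permutes_compose permutes_swap_id simp: evenperm_comp permutation_compose permutation_swap_id evenperm_swap)
    then show ?thesis using h by (intro bexI[of _ "(Transposition.transpose 3 0 \<circ> Transposition.transpose 1 0)"]) (auto simp: Transposition.transpose_def)
  next
    assume h: "t = [2,0,1,3]"
    have "(Transposition.transpose 2 1 \<circ> Transposition.transpose 1 0) \<in> Ev" unfolding Ev_def by (auto intro!: permutes_compose permutes_swap_id simp: evenperm_comp permutation_compose permutation_swap_id evenperm_swap)
    then show ?thesis using h by (intro bexI[of _ "(Transposition.transpose 2 1 \<circ> Transposition.transpose 1 0)"]) (auto simp: Transposition.transpose_def)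
  next
    assume h: "t = [2,1,3,0]"
    have "(Transposition.transpose 3 0 \<circ> Transposition.transpose 2 0) \<in> Ev" unfolding Ev_def by (auto intro!: permutes_compose permutes_swap_id simp: evenperm_comp permutation_compose permutation_swap_id evenperm_swap)
    then show ?thesis using h by (intro bexI[of _ "(Transposition.transpose 3 0 \<circ> Transposition.transpose 2 0)"]) (auto simp: Transposition.transpose_def)
  next
    assume h: "t = [2,3,0,1]"
    have "(Transposition.transpose 3 1 \<circ> Transposition.transpose 2 0) \<in> Ev" unfolding Ev_def by (auto intro!: permutes_compose permutes_swap_id simp: evenperm_comp permutation_compose permutation_swap_id evenperm_swap)
    then show ?thesis using h by (intro bexI[of _ "(Transposition.transpose 3 1 \<circ> Transposition.transpose 2 0)"]) (auto simp: Transposition.transpose_def)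
  next
    assume h: "t = [3,0,2,1]"
    have "(Transposition.transpose 3 1 \<circ> Transposition.transpose 1 0) \<in> Ev" unfolding Ev_def by (auto intro!: permutes_compose permutes_swap_id simp: evenperm_comp permutation_compose permutation_swap_id evenperm_swap)
    then show ?thesis using h by (intro bexI[of _ "(Transposition.transpose 3 1 \<circ> Transposition.transpose 1 0)"]) (auto simp: Transposition.transpose_def)
  next
    assume h: "t = [3,1,0,2]"
    have "(Transposition.transpose 3 2 \<circ> Transposition.transpose 2 0) \<in> Ev" unfolding Ev_def by (auto intro!: permutes_compose permutes_swap_id simp: evenperm_comp permutation_compose permutation_swap_id evenperm_swap)
    then show ?thesis using h by (intro bexI[of _ "(Transposition.transpose 3 2 \<circ> Transposition.transpose 2 0)"]) (auto simp: Transposition.transpose_def)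
  next
    assume h: "t = [3,2,1,0]"
    have "(Transposition.transpose 3 0 \<circ> Transposition.transpose 2 1) \<in> Ev" unfolding Ev_def by (auto intro!: permutes_compose permutes_swap_id simp: evenperm_comp permutation_compose permutation_swap_id evenperm_swap)
    then show ?thesis using h by (intro bexI[of _ "(Transposition.transpose 3 0 \<circ> Transposition.transpose 2 1)"]) (auto simp: Transposition.transpose_def)
  qed simp
qed

lemma nv_conv:
  assumes p: "p \<in> Ev" and k: "k < 3" and s: "\<forall>i<4. s i = of_int (\<sigma>!i)" and t: "\<forall>i<4. p i = t!i"
  shows "nv k p s = conv (actI t \<sigma> (baseI k))"
proof -
  have pp: "p permutes {..<4}" using p by (rule Ev_permutes)
  have e: "s i * base k ! p i = zr (zs (\<sigma>!i) (baseI k ! (t!i)))" if i: "i < 4" for i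
  proof -
    have "p i < 4" using permutes4_lt[OF pp i] .
    then show ?thesis using s t i by (simp add: zr_zs baseI_zr)
  qed
  show ?thesis unfolding nv_def conv_def actI_def actl_def mk_eq
    using e[of 0] e[of 1] e[of 2] e[of 3] by simp
qed

lemma SG16_mem: "a \<in> {1,-1} \<Longrightarrow> b \<in> {1,-1} \<Longrightarrow> c \<in> {1,-1} \<Longrightarrow> d \<in> {1,-1::int} \<Longrightarrow> [a,b,c,d] \<in> set SG16"
  by (elim insertE emptyE) (simp_all add: SG16_def)

lemma SG16_complete: assumes "sgs s" shows "\<exists>\<sigma>\<in>set SG16. \<forall>i<4. s i = of_int (\<sigma>!i)"
proof -
  define g where "g = (\<lambda>x::real. if x = 1 then (1::int) else -1)"
  have gs: "s i = of_int (g (s i))" "g (s i) \<in> {1,-1}" for i using assms unfolding sgs_def g_def by auto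
  have "[g (s 0), g (s 1), g (s 2), g (s 3)] \<in> set SG16" using gs(2) by (intro SG16_mem) auto
  moreover have "\<forall>i<4. s i = of_int ([g (s 0), g (s 1), g (s 2), g (s 3)] ! i)"
    using gs(1) by (auto dest!: lt4_cases)
  ultimately show ?thesis by blast
qed

lemma SG16_sound: assumes "\<sigma> \<in> set SG16" shows "\<exists>s. sgs s \<and> (\<forall>i<4. s i = of_int (\<sigma>!i))"
proof -
  have "\<forall>i<4. \<sigma>!i = 1 \<or> \<sigma>!i = -1" using assms by (auto simp: SG16_def dest!: lt4_cases)
  then have "sgs (\<lambda>i. if i < 4 then of_int (\<sigma>!i) else 1)" unfolding sgs_def by auto
  then show ?thesis by (intro exI[of _ "\<lambda>i. if i < 4 then of_int (\<sigma>!i) else 1"]) auto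
qed

lemma mem_NLgen: assumes "k < 3" "t \<in> set E12" "\<sigma> \<in> set SG16" shows "actI t \<sigma> (baseI k) \<in> set NLgen"
proof -
  have "k = 0 \<or> k = 1 \<or> k = 2" using assms(1) by arith
  then show ?thesis unfolding NLgen_def using assms(2,3) by (elim disjE) auto
qed

lemma normals_NLgen: assumes "n \<in> normals" shows "\<exists>x\<in>set NLgen. n = conv x"
proof -
  obtain k p s where n: "n = nv k p s" and k: "k < 3" and p: "p \<in> Ev" and s: "sgs s"
    using assms unfolding normals_param by blast
  obtain \<sigma> where \<sigma>: "\<sigma> \<in> set SG16" "\<forall>i<4. s i = of_int (\<sigma>!i)" using SG16_complete[OF s] by blast
  have t: "\<forall>i<4. p i = [p 0, p 1, p 2, p 3] ! i" by (auto dest!: lt4_cases)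
  have "n = conv (actI [p 0, p 1, p 2, p 3] \<sigma> (baseI k))" using nv_conv[OF p k \<sigma>(2) t] n by simp
  moreover have "actI [p 0, p 1, p 2, p 3] \<sigma> (baseI k) \<in> set NLgen"
    using mem_NLgen[OF k E12_complete[OF p] \<sigma>(1)] .
  ultimately show ?thesis by blast
qed

lemma gen_normals: assumes k: "k < 3" and t: "t \<in> set E12" and \<sigma>: "\<sigma> \<in> set SG16"
  shows "conv (actI t \<sigma> (baseI k)) \<in> normals"
proof -
  obtain p where p: "p \<in> Ev" "p 0 = t!0" "p 1 = t!1" "p 2 = t!2" "p 3 = t!3" using E12_sound[OF t] by blast
  obtain s where s: "sgs s" "\<forall>i<4. s i = of_int (\<sigma>!i)" using SG16_sound[OF \<sigma>] by blast
  have pt: "\<forall>i<4. p i = t!i" using p by (auto dest!: lt4_cases)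
  have "nv k p s \<in> normals" unfolding normals_param using k p(1) s(1) by blast
  then show ?thesis using nv_conv[OF p(1) k s(2) pt] by simp
qed

lemma rep_conv: "k < 3 \<Longrightarrow> rep k = conv (baseI k)"
  unfolding rep_def nv_def conv_def actl_def mk_eq
  by (auto simp: baseI_def base_def less_Suc_eq numeral_eq_Suc)

lemma first_normal: "n \<in> normals \<Longrightarrow> n$1 = cc"
  unfolding normals_param nv_def by auto

lemma rep_self: "k < 3 \<Longrightarrow> mink (rep k) (rep k) = 4 - 2 * tau"
  by (auto simp: rep_conv mink_conv dt_def baseI_def less_Suc_eq numeral_eq_Suc)

lemma normal_self: assumes "n \<in> normals" shows "mink n n = 4 - 2 * tau"
proof -
  obtain k p s where "k < 3" "p \<in> Ev" "sgs s" "n = gact p s (rep k)" using normals_rep[OF assms] by blast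
  then show ?thesis using mink_gact[OF Ev_permutes] rep_self by simp
qed

lemma normal_eq_CS:
  assumes n: "n \<in> normals" and m: "m \<in> normals" and e: "mink n m = 4 - 2 * tau"
  shows "n = m"
proof -
  have n1: "n$1 = cc" and m1: "m$1 = cc" using first_normal n m by auto
  have nn: "mink n n = 4 - 2 * tau" and mm: "mink m m = 4 - 2*tau" using normal_self n m by auto
  have "(n$2 - m$2)^2 + (n$3 - m$3)^2 + (n$4 - m$4)^2 + (n$5 - m$5)^2 = mink n n + mink m m - 2 * mink n m"
    unfolding mink_def using n1 m1 by (simp add: power2_eq_square algebra_simps)
  also have "\<dots> = 0" using nn mm e by simp
  finally have z: "(n$2 - m$2)^2 + (n$3 - m$3)^2 + (n$4 - m$4)^2 + (n$5 - m$5)^2 = 0" .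
  have "n$2 - m$2 = 0 \<and> n$3 - m$3 = 0 \<and> n$4 - m$4 = 0 \<and> n$5 - m$5 = 0"
  proof -
    have a: "0 \<le> (n$2 - m$2)^2" "0 \<le> (n$3 - m$3)^2" "0 \<le> (n$4 - m$4)^2" "0 \<le> (n$5 - m$5)^2" by simp_all
    then have "(n$2 - m$2)^2 = 0" "(n$3 - m$3)^2 = 0" "(n$4 - m$4)^2 = 0" "(n$5 - m$5)^2 = 0" using z by linarith+
    then show ?thesis by simp
  qed
  then show ?thesis using n1 m1 by (simp add: vec5_eq)
qed

definition low :: "zt \<Rightarrow> bool" where
  "low d = ((snd d \<ge> 0 \<and> 10 * fst d + 17 * snd d \<le> 20) \<or> (snd d < 0 \<and> 5 * fst d + 8 * snd d \<le> 10))"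
definition NbP :: "nat \<Rightarrow> (nat * nat list * int list) list" where
  "NbP k = (if k = 0 then NbP0 else if k = 1 then NbP1 else NbP2)"
definition NbI :: "nat \<Rightarrow> zt list list" where
  "NbI k = map (\<lambda>(k',t,s). actI t s (baseI k')) (NbP k)"
definition rowchk2 :: "zt list \<Rightarrow> zt \<Rightarrow> zt list list \<Rightarrow> bool" where
  "rowchk2 x d nb = ((d = (0,2) \<and> x \<in> set nb) \<or> d = (4,0) \<or> low d)"
definition rowok :: "nat \<Rightarrow> bool" where
  "rowok k = list_all (\<lambda>x. rowchk2 x (dt (baseI k) x) (NbI k)) NLgen"
definition Dm :: "zt list list \<Rightarrow> zt list list" where
  "Dm nb = map (\<lambda>a. map (\<lambda>b. dt a b) nb) nb"
definition nadj :: "zt \<Rightarrow> bool" where "nadj d = (d \<noteq> (0,2))"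
definition noind4 :: "zt list list \<Rightarrow> bool" where
  "noind4 D = list_all (\<lambda>i. list_all (\<lambda>j. list_all (\<lambda>k.
      filter (\<lambda>l. l \<noteq> i \<and> l \<noteq> j \<and> l \<noteq> k \<and> nadj (D!i!l) \<and> nadj (D!j!l) \<and> nadj (D!k!l)) [0..<12] = [])
     (filter (\<lambda>k. k \<noteq> i \<and> k \<noteq> j \<and> nadj (D!i!k) \<and> nadj (D!j!k)) [0..<12]))
     (filter (\<lambda>j. j \<noteq> i \<and> nadj (D!i!j)) [0..<12])) [0..<12]"
definition offd :: "zt list list \<Rightarrow> bool" where
  "offd D = list_all (\<lambda>i. list_all (\<lambda>j. i = j \<or> D!i!j = (0,2) \<or> low (D!i!j)) [0..<12]) [0..<12]"
definition locok :: "zt list list \<Rightarrow> bool" where "locok D = (offd D \<and> noind4 D)"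
definition nbok :: "nat \<Rightarrow> bool" where
  "nbok k = (length (NbP k) = 12 \<and> list_all (\<lambda>(k',t,s). k' < 3 \<and> t \<in> set E12 \<and> s \<in> set SG16) (NbP k)
      \<and> list_all (\<lambda>x. dt (baseI k) x = (0,2)) (NbI k))"

lemma comp_rowok: "rowok 0" "rowok 1" "rowok 2" by code_simp+
lemma comp_locok: "locok (Dm (NbI 0))" "locok (Dm (NbI 1))" "locok (Dm (NbI 2))" by code_simp+
lemma comp_nbok: "nbok 0" "nbok 1" "nbok 2" by code_simp+

lemma checks: assumes "k < 3" shows "rowok k" "locok (Dm (NbI k))" "nbok k"
proof -
  have "k = 0 \<or> k = 1 \<or> k = 2" using assms by arith
  then show "rowok k" "locok (Dm (NbI k))" "nbok k" using comp_rowok comp_locok comp_nbok by auto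
qed

lemma low_zr: assumes "low d" shows "zr d \<le> 2"
proof -
  obtain a b where d: "d = (a,b)" by fastforce
  have t: "1.6 < tau" "tau < 1.7" using tau_bounds by auto
  show ?thesis
  proof (cases "b \<ge> 0")
    case True
    then have "10 * a + 17 * b \<le> 20" using assms d unfolding low_def by auto
    then have "10 * real_of_int a + 17 * real_of_int b \<le> 20" by linarith
    moreover have "real_of_int b * tau \<le> real_of_int b * 1.7" using True t by (intro mult_left_mono) auto
    ultimately show ?thesis using d by simp
  next
    case False
    then have "5 * a + 8 * b \<le> 10" using assms d unfolding low_def by auto
    then have "5 * real_of_int a + 8 * real_of_int b \<le> 10" by linarith
    moreover have "real_of_int b * tau \<le> real_of_int b * 1.6" using False t
      by (intro mult_left_mono_neg) auto
    ultimately show ?thesis using d by simp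
  qed
qed

lemma rep_row:
  assumes k: "k < 3" and m: "m \<in> normals"
  shows "(mink (rep k) m = 0 \<and> m \<in> conv ` set (NbI k)) \<or> m = rep k \<or> mink (rep k) m \<le> 2 - 2 * tau"
proof -
  obtain x where x: "x \<in> set NLgen" "m = conv x" using normals_NLgen[OF m] by blast
  define d where "d = dt (baseI k) x"
  have r: "rowchk2 x d (NbI k)" using checks(1)[OF k] x(1) unfolding rowok_def list_all_iff d_def by blast
  have mk: "mink (rep k) m = - 2 * tau + zr d" unfolding d_def x(2) rep_conv[OF k] mink_conv ..
  consider "d = (0,2)" "x \<in> set (NbI k)" | "d = (4,0)" | "low d" using r unfolding rowchk2_def by blast
  then show ?thesis
  proof cases
    case 1 then show ?thesis using mk x(2) by simp
  next
    case 2
    then have "mink (rep k) m = 4 - 2 * tau" using mk by simp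
    then have "rep k = m" using normal_eq_CS rep_normals[OF k] m by blast
    then show ?thesis by simp
  next
    case 3 then show ?thesis using mk low_zr by auto
  qed
qed

lemma nb_normals: assumes k: "k < 3" and x: "x \<in> set (NbI k)" shows "conv x \<in> normals" "dt (baseI k) x = (0,2)"
proof -
  have nb: "nbok k" using checks(3)[OF k] .
  obtain k' t s where p: "(k',t,s) \<in> set (NbP k)" "x = actI t s (baseI k')"
    using x unfolding NbI_def by auto
  have "k' < 3" "t \<in> set E12" "s \<in> set SG16" using nb p(1) unfolding nbok_def list_all_iff by auto
  then show "conv x \<in> normals" using gen_normals p(2) by simp
  show "dt (baseI k) x = (0,2)" using nb x unfolding nbok_def list_all_iff by auto
qed

lemma nb_set: assumes k: "k < 3" shows "{m \<in> normals. mink (rep k) m = 0} = conv ` set (NbI k)"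
proof (rule set_eqI, rule iffI)
  fix m assume "m \<in> {m \<in> normals. mink (rep k) m = 0}"
  then have m: "m \<in> normals" "mink (rep k) m = 0" by auto
  have "m \<noteq> rep k" using m(2) rep_self[OF k] tau_bounds by auto
  moreover have "\<not> mink (rep k) m \<le> 2 - 2 * tau" using m(2) tau_bounds by auto
  ultimately show "m \<in> conv ` set (NbI k)" using rep_row[OF k m(1)] by blast
next
  fix m assume "m \<in> conv ` set (NbI k)"
  then obtain x where x: "x \<in> set (NbI k)" "m = conv x" by blast
  have "mink (rep k) m = 0" using nb_normals(2)[OF k x(1)] unfolding x(2) rep_conv[OF k] mink_conv by simp
  then show "m \<in> {m \<in> normals. mink (rep k) m = 0}" using nb_normals(1)[OF k x(1)] x(2) by simp
qed

lemma lenNb: "k < 3 \<Longrightarrow> length (NbI k) = 12"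
  using checks(3) unfolding nbok_def NbI_def by auto

lemma Dm_nth: "i < length nb \<Longrightarrow> j < length nb \<Longrightarrow> Dm nb ! i ! j = dt (nb!i) (nb!j)"
  unfolding Dm_def by simp

lemma nb_distinct:
  assumes k: "k < 3" and ij: "i < 12" "j < 12" "i \<noteq> j"
  shows "conv (NbI k ! i) \<noteq> conv (NbI k ! j)"
proof
  assume e: "conv (NbI k ! i) = conv (NbI k ! j)"
  have L: "length (NbI k) = 12" using lenNb[OF k] .
  have "offd (Dm (NbI k))" using checks(2)[OF k] unfolding locok_def by simp
  moreover have "i \<in> set [0..<12]" "j \<in> set [0..<12]" using ij by auto
  ultimately have "i = j \<or> Dm (NbI k) ! i ! j = (0,2) \<or> low (Dm (NbI k) ! i ! j)" unfolding offd_def list_all_iff by blast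
  then have "Dm (NbI k) ! i ! j = (0,2) \<or> low (Dm (NbI k) ! i ! j)" using ij by simp
  then have "dt (NbI k ! i) (NbI k ! j) = (0,2) \<or> low (dt (NbI k ! i) (NbI k ! j))" using Dm_nth L ij by simp
  then have "zr (dt (NbI k ! i) (NbI k ! j)) \<le> 2 * tau" using low_zr tau_bounds by fastforce
  moreover have "NbI k ! i \<in> set (NbI k)" using L ij by simp
  then have "mink (conv (NbI k ! i)) (conv (NbI k ! i)) = 4 - 2 * tau" using nb_normals(1)[OF k] normal_self by blast
  then have "zr (dt (NbI k ! i) (NbI k ! j)) = 4" using e mink_conv[of "NbI k ! i" "NbI k ! j"] by simp
  ultimately show False using tau_bounds by simp
qed

lemma nb_card: assumes k: "k < 3" shows "card (conv ` set (NbI k)) = 12"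
proof -
  have L: "length (NbI k) = 12" using lenNb[OF k] .
  have "distinct (map conv (NbI k))" unfolding distinct_conv_nth using L nb_distinct[OF k] by auto
  then have "card (set (map conv (NbI k))) = 12" using distinct_card L by fastforce
  then show ?thesis by simp
qed

lemma four_elems:
  assumes "4 \<le> card T"
  shows "\<exists>a b c d. a \<in> T \<and> b \<in> T \<and> c \<in> T \<and> d \<in> T \<and> a \<noteq> b \<and> a \<noteq> c \<and> a \<noteq> d \<and> b \<noteq> c \<and> b \<noteq> d \<and> c \<noteq> d"
proof -
  have h4: "Suc 3 \<le> card T" using assms by simp
  from card_le_Suc_iff[THEN iffD1, OF h4] obtain a B where 1: "T = insert a B" "a \<notin> B" "3 \<le> card B" by blast
  have h3: "Suc 2 \<le> card B" using 1(3) by simp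
  from card_le_Suc_iff[THEN iffD1, OF h3] obtain b C where 2: "B = insert b C" "b \<notin> C" "2 \<le> card C" by blast
  have h2: "Suc 1 \<le> card C" using 2(3) by simp
  from card_le_Suc_iff[THEN iffD1, OF h2] obtain c D where 3: "C = insert c D" "c \<notin> D" "1 \<le> card D" by blast
  have h1: "Suc 0 \<le> card D" using 3(3) by simp
  from card_le_Suc_iff[THEN iffD1, OF h1] obtain d E where 4: "D = insert d E" "d \<notin> E" by blast
  show ?thesis using 1 2 3 4 by blast
qed

lemma nb_indep:
  assumes k: "k < 3" and T: "T \<subseteq> conv ` set (NbI k)" and ind: "\<forall>a\<in>T. \<forall>b\<in>T. mink a b \<noteq> 0"
  shows "card T \<le> 3"
proof (rule ccontr)
  assume "\<not> card T \<le> 3"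
  then have c4: "4 \<le> card T" by simp
  have fin: "finite T" using T finite_surj by blast
  obtain a b c d where abcd: "a \<in> T" "b \<in> T" "c \<in> T" "d \<in> T" "a \<noteq> b" "a \<noteq> c" "a \<noteq> d" "b \<noteq> c" "b \<noteq> d" "c \<noteq> d"
    using four_elems[OF c4] by blast
  have L: "length (NbI k) = 12" using lenNb[OF k] .
  have idx: "\<exists>i<12. y = conv (NbI k ! i)" if y: "y \<in> T" for y
  proof -
    obtain x where "x \<in> set (NbI k)" "y = conv x" using T y by blast
    then show ?thesis using L by (auto simp: in_set_conv_nth)
  qed
  obtain i1 where i1: "i1 < 12" "a = conv (NbI k ! i1)" using idx abcd(1) by blast
  obtain i2 where i2: "i2 < 12" "b = conv (NbI k ! i2)" using idx abcd(2) by blast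
  obtain i3 where i3: "i3 < 12" "c = conv (NbI k ! i3)" using idx abcd(3) by blast
  obtain i4 where i4: "i4 < 12" "d = conv (NbI k ! i4)" using idx abcd(4) by blast
  have na: "nadj (Dm (NbI k) ! i ! j)" if "i < 12" "j < 12" "conv (NbI k ! i) \<in> T" "conv (NbI k ! j) \<in> T" for i j
  proof -
    have "mink (conv (NbI k ! i)) (conv (NbI k ! j)) \<noteq> 0" using ind that(3,4) by blast
    then have "dt (NbI k ! i) (NbI k ! j) \<noteq> (0,2)" using mink_conv[of "NbI k ! i" "NbI k ! j"] by auto
    then show ?thesis using Dm_nth L that(1,2) unfolding nadj_def by simp
  qed
  have d12: "i1 \<noteq> i2" "i1 \<noteq> i3" "i1 \<noteq> i4" "i2 \<noteq> i3" "i2 \<noteq> i4" "i3 \<noteq> i4"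
    using abcd i1 i2 i3 i4 by auto
  have "noind4 (Dm (NbI k))" using checks(2)[OF k] unfolding locok_def by simp
  then have "filter (\<lambda>l. l \<noteq> i1 \<and> l \<noteq> i2 \<and> l \<noteq> i3 \<and> nadj (Dm (NbI k)!i1!l) \<and> nadj (Dm (NbI k)!i2!l) \<and> nadj (Dm (NbI k)!i3!l)) [0..<12] = []"
    unfolding noind4_def list_all_iff using i1 i2 i3 i4 abcd d12 na by auto
  moreover have "i4 \<in> set (filter (\<lambda>l. l \<noteq> i1 \<and> l \<noteq> i2 \<and> l \<noteq> i3 \<and> nadj (Dm (NbI k)!i1!l) \<and> nadj (Dm (NbI k)!i2!l) \<and> nadj (Dm (NbI k)!i3!l)) [0..<12])"
    using i1 i2 i3 i4 abcd d12 na by auto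
  ultimately show False by simp
qed

section \<open>Global facts via symmetry\<close>

lemma transport:
  assumes "n \<in> normals"
  obtains k p s where "k < 3" "p \<in> Ev" "sgs s" "n = gact p s (rep k)"
  using normals_rep[OF assms] by blast

lemma F1: assumes n: "n \<in> normals" and n': "n' \<in> normals" and ne: "n \<noteq> n'"
  shows "mink n n' = 0 \<or> mink n n' \<le> 2 - 2 * tau"
proof -
  obtain k p s where k: "k < 3" and p: "p \<in> Ev" and s: "sgs s" and nn: "n = gact p s (rep k)"
    using transport[OF n] by blast
  have pp: "p permutes {..<4}" using Ev_permutes[OF p] .
  define h where "h = gact (inv p) (\<lambda>i. s (inv p i))"
  have hn: "h n' \<in> normals" unfolding h_def using gact_normals[OF Ev_inv[OF p] sgs_inv[OF s] n'] .
  have gh: "gact p s (h n') = n'" unfolding h_def using gact_inv2[OF pp s] .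
  have e: "mink n n' = mink (rep k) (h n')" using mink_gact[OF pp s, of "rep k" "h n'"] nn gh by simp
  have "h n' \<noteq> rep k" using ne nn gh by auto
  then show ?thesis using rep_row[OF k hn] e by auto
qed

lemma F2: assumes n: "n \<in> normals" shows "card {n' \<in> normals. mink n n' = 0} = 12"
proof -
  obtain k p s where k: "k < 3" and p: "p \<in> Ev" and s: "sgs s" and nn: "n = gact p s (rep k)"
    using transport[OF n] by blast
  have pp: "p permutes {..<4}" using Ev_permutes[OF p] .
  define h where "h = gact (inv p) (\<lambda>i. s (inv p i))"
  have hnorm: "h x \<in> normals" if "x \<in> normals" for x
    unfolding h_def using gact_normals[OF Ev_inv[OF p] sgs_inv[OF s] that] .
  have gh: "gact p s (h x) = x" for x unfolding h_def using gact_inv2[OF pp s] .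
  have hg: "h (gact p s x) = x" for x unfolding h_def using gact_inv[OF pp s] .
  have "{n' \<in> normals. mink n n' = 0} = gact p s ` {m \<in> normals. mink (rep k) m = 0}"
  proof (rule set_eqI, rule iffI)
    fix x assume "x \<in> {n' \<in> normals. mink n n' = 0}"
    then have x: "x \<in> normals" "mink n x = 0" by auto
    have "mink (rep k) (h x) = 0" using mink_gact[OF pp s, of "rep k" "h x"] nn gh x(2) by simp
    then have "h x \<in> {m \<in> normals. mink (rep k) m = 0}" using hnorm[OF x(1)] by simp
    then show "x \<in> gact p s ` {m \<in> normals. mink (rep k) m = 0}" using gh[of x] by (metis image_eqI)
  next
    fix x assume "x \<in> gact p s ` {m \<in> normals. mink (rep k) m = 0}"
    then obtain m where m: "m \<in> normals" "mink (rep k) m = 0" "x = gact p s m" by blast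
    then show "x \<in> {n' \<in> normals. mink n n' = 0}"
      using gact_normals[OF p s m(1)] mink_gact[OF pp s, of "rep k" m] nn by simp
  qed
  moreover have "inj_on (gact p s) {m \<in> normals. mink (rep k) m = 0}"
    by (rule inj_on_inverseI[of _ h]) (simp add: hg)
  ultimately show ?thesis using card_image nb_set[OF k] nb_card[OF k] by metis
qed

lemma F3: assumes n: "n \<in> normals" and T: "T \<subseteq> {n' \<in> normals. mink n n' = 0}"
  and ind: "\<forall>a\<in>T. \<forall>b\<in>T. mink a b \<noteq> 0"
  shows "card T \<le> 3"
proof -
  obtain k p s where k: "k < 3" and p: "p \<in> Ev" and s: "sgs s" and nn: "n = gact p s (rep k)"
    using transport[OF n] by blast
  have pp: "p permutes {..<4}" using Ev_permutes[OF p] .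
  define h where "h = gact (inv p) (\<lambda>i. s (inv p i))"
  have hnorm: "h x \<in> normals" if "x \<in> normals" for x
    unfolding h_def using gact_normals[OF Ev_inv[OF p] sgs_inv[OF s] that] .
  have gh: "gact p s (h x) = x" for x unfolding h_def using gact_inv2[OF pp s] .
  have mh: "mink (h x) (h y) = mink x y" for x y using mink_gact[OF pp s, of "h x" "h y"] gh by simp
  have "h ` T \<subseteq> {m \<in> normals. mink (rep k) m = 0}"
  proof
    fix y assume "y \<in> h ` T"
    then obtain x where x: "x \<in> T" "y = h x" by blast
    have "mink (rep k) (h x) = mink n x" using mink_gact[OF pp s, of "rep k" "h x"] nn gh by simp
    then show "y \<in> {m \<in> normals. mink (rep k) m = 0}" using x T hnorm by auto
  qed
  then have "card (h ` T) \<le> 3" using nb_indep[OF k] nb_set[OF k] ind mh by auto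
  moreover have "inj_on h T" by (rule inj_on_inverseI[of _ "gact p s"]) (simp add: gh)
  ultimately show ?thesis using card_image by metis
qed

section \<open>Hyperbolic geometry\<close>

lemma lagrange4:
  fixes a1 a2 a3 a4 b1 b2 b3 b4 :: real
  shows "(a1*b1+a2*b2+a3*b3+a4*b4)^2 \<le> (a1^2+a2^2+a3^2+a4^2)*(b1^2+b2^2+b3^2+b4^2)"
proof -
  have "(a1^2+a2^2+a3^2+a4^2)*(b1^2+b2^2+b3^2+b4^2) - (a1*b1+a2*b2+a3*b3+a4*b4)^2 =
     (a1*b2-a2*b1)^2 + (a1*b3-a3*b1)^2 + (a1*b4-a4*b1)^2 + (a2*b3-a3*b2)^2 + (a2*b4-a4*b2)^2 + (a3*b4-a4*b3)^2"
    by (simp add: power2_eq_square algebra_simps)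
  also have "\<dots> \<ge> 0" by simp
  finally show ?thesis by simp
qed

lemma revCS:
  assumes x: "x \<in> H4" and u: "mink u u < 0"
  shows "mink x u \<noteq> 0"
proof
  assume e: "mink x u = 0"
  define X where "X = x$2^2 + x$3^2 + x$4^2 + x$5^2"
  define U where "U = u$2^2 + u$3^2 + u$4^2 + u$5^2"
  define D where "D = x$2*u$2 + x$3*u$3 + x$4*u$4 + x$5*u$5"
  have hx: "x$1^2 = 1 + X" using x unfolding H4_def mink_def X_def by (simp add: power2_eq_square)
  have hu: "U < u$1^2" using u unfolding mink_def U_def by (simp add: power2_eq_square)
  have hd: "D = x$1 * u$1" using e unfolding mink_def D_def by simp
  have cs: "D^2 \<le> X * U" unfolding D_def X_def U_def by (rule lagrange4)
  have X0: "X \<ge> 0" and U0: "U \<ge> 0" unfolding X_def U_def by simp_all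
  have "X * U < x$1^2 * u$1^2"
  proof -
    have "X * U \<le> X * u$1^2" using hu X0 by (intro mult_left_mono) auto
    also have "\<dots> < x$1^2 * u$1^2" using hx hu U0 by (intro mult_strict_right_mono) auto
    finally show ?thesis .
  qed
  moreover have "D^2 = x$1^2 * u$1^2" using hd by (simp add: power_mult_distrib)
  ultimately show False using cs by simp
qed

definition ctr :: "real^5" where "ctr = mk 1 [0,0,0,0]"

lemma mink_ctr: "mink ctr n = - (n$1)" "mink n ctr = - (n$1)" "mink ctr ctr = -1"
  unfolding ctr_def mink_def by simp_all

lemma normalize_pt:
  assumes y1: "y$1 > 0" and yy: "mink y y < 0"
  shows "(1 / sqrt (- mink y y)) *\<^sub>R y \<in> H4" "\<And>n. mink ((1 / sqrt (- mink y y)) *\<^sub>R y) n = (1 / sqrt (- mink y y)) * mink y n"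
proof -
  define r where "r = sqrt (- mink y y)"
  have r: "r > 0" "r * r = - mink y y" unfolding r_def using yy by simp_all
  have "mink ((1/r) *\<^sub>R y) ((1/r) *\<^sub>R y) = (1/r) * (1/r) * mink y y"
    by (simp add: mink_scale_left mink_scale_right)
  also have "\<dots> = -1" using r yy by (simp add: field_simps)
  finally have "mink ((1/r) *\<^sub>R y) ((1/r) *\<^sub>R y) = -1" .
  moreover have "((1/r) *\<^sub>R y)$1 > 0" using r y1 by simp
  ultimately show "(1 / sqrt (- mink y y)) *\<^sub>R y \<in> H4" unfolding H4_def r_def by simp
  show "\<And>n. mink ((1 / sqrt (- mink y y)) *\<^sub>R y) n = (1 / sqrt (- mink y y)) * mink y n"
    by (simp add: mink_scale_left)
qed

lemma normal_first: "n \<in> normals \<Longrightarrow> mink ctr n = - cc"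
  using first_normal mink_ctr by simp

lemma tau_facts: "0 < 4 - 2 * tau" "12 - 8 * tau < 0" "2 - 2 * tau < 0" using tau_bounds by auto

lemma wall_point:
  assumes n: "n \<in> normals"
  shows "\<exists>x. x \<in> wall n \<and> (\<forall>m\<in>normals. m \<noteq> n \<longrightarrow> mink x m \<noteq> 0)"
proof -
  define a where "a = (4 - 2 * tau) / cc"
  have ac: "a * cc = 4 - 2 * tau" unfolding a_def using cc_pos by simp
  have a0: "a > 0" unfolding a_def using cc_pos tau_facts by simp
  define y where "y = a *\<^sub>R ctr + n"
  have my: "mink y m = - (4 - 2 * tau) + mink n m" if "m \<in> normals" for m
    unfolding y_def using normal_first[OF that] ac by (simp add: mink_add_left mink_scale_left)
  have y1: "y$1 > 0" unfolding y_def ctr_def using first_normal[OF n] a0 cc_pos by simp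
  have yy: "mink y y < 0"
  proof -
    have "mink y y = a * a * mink ctr ctr + 2 * a * mink ctr n + mink n n"
      unfolding y_def by (simp add: mink_add_left mink_add_right mink_scale_left mink_scale_right mink_sym[of n ctr] algebra_simps)
    also have "\<dots> = - (a * a) - (4 - 2 * tau)"
      using mink_ctr normal_first[OF n] normal_self[OF n] ac by (simp add: algebra_simps)
    moreover have "a * a > 0" using a0 by simp
    ultimately show ?thesis using tau_facts by linarith
  qed
  define x where "x = (1 / sqrt (- mink y y)) *\<^sub>R y"
  have xH: "x \<in> H4" unfolding x_def using normalize_pt(1)[OF y1 yy] .
  define r where "r = sqrt (- mink y y)"
  have pos: "r > 0" unfolding r_def using yy by simp
  have mx: "mink x m = mink y m / r" for m unfolding x_def r_def using normalize_pt(2)[OF y1 yy] by simp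
  have other: "mink y m < 0" if "m \<in> normals" "m \<noteq> n" for m
  proof -
    have nm: "n \<noteq> m" using that(2) by auto
    have "mink n m = 0 \<or> mink n m \<le> 2 - 2 * tau" by (rule F1[OF n that(1) nm])
    then show ?thesis using my[OF that(1)] tau_facts by linarith
  qed
  have yn: "mink y n = 0" using my[OF n] normal_self[OF n] by simp
  have "mink x m \<le> 0" if "m \<in> normals" for m
  proof (cases "m = n")
    case True then show ?thesis using mx yn by simp
  next
    case False then show ?thesis unfolding mx using other[OF that False] pos by (simp add: divide_nonpos_pos)
  qed
  then have "x \<in> cell120" unfolding cell120_def using xH by simp
  moreover have "mink x n = 0" using mx yn by simp
  moreover have "\<forall>m\<in>normals. m \<noteq> n \<longrightarrow> mink x m \<noteq> 0"
  proof (intro ballI impI)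
    fix m assume "m \<in> normals" "m \<noteq> n"
    then have "mink y m < 0" by (rule other)
    then show "mink x m \<noteq> 0" unfolding mx using pos by simp
  qed
  ultimately show ?thesis unfolding wall_def by blast
qed

lemma adj_point:
  assumes n: "n \<in> normals" and m: "m \<in> normals" and nm: "mink n m = 0"
  shows "wall n \<inter> wall m \<noteq> {}"
proof -
  define a where "a = (4 - 2 * tau) / cc"
  have ac: "a * cc = 4 - 2 * tau" unfolding a_def using cc_pos by simp
  have a0: "a > 0" unfolding a_def using cc_pos tau_facts by simp
  define y where "y = a *\<^sub>R ctr + n + m"
  have my: "mink y q = - (4 - 2 * tau) + mink n q + mink m q" if "q \<in> normals" for q
    unfolding y_def using normal_first[OF that] ac by (simp add: mink_add_left mink_scale_left)
  have y1: "y$1 > 0" unfolding y_def ctr_def using first_normal[OF n] first_normal[OF m] a0 cc_pos by simp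
  have yy: "mink y y < 0"
  proof -
    have "mink y y = a * a * mink ctr ctr + 2 * a * mink ctr n + 2 * a * mink ctr m + mink n n + mink m m + 2 * mink n m"
      unfolding y_def by (simp add: mink_add_left mink_add_right mink_scale_left mink_scale_right mink_sym[of n ctr]
           mink_sym[of m ctr] mink_sym[of m n] algebra_simps)
    also have "\<dots> = - (a * a) - 2 * (4 - 2 * tau)"
      using mink_ctr normal_first[OF n] normal_first[OF m] normal_self[OF n] normal_self[OF m] ac nm
      by (simp add: algebra_simps)
    finally have e: "mink y y = - (a * a) - 2 * (4 - 2 * tau)" .
    have "a * a > 0" using a0 by simp
    then show ?thesis using e tau_facts by (smt (verit))
  qed
  define x where "x = (1 / sqrt (- mink y y)) *\<^sub>R y"
  have xH: "x \<in> H4" unfolding x_def using normalize_pt(1)[OF y1 yy] .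
  define r where "r = sqrt (- mink y y)"
  have pos: "r > 0" unfolding r_def using yy by simp
  have mx: "mink x q = mink y q / r" for q unfolding x_def r_def using normalize_pt(2)[OF y1 yy] by simp
  have nonpos: "mink n q \<le> 0" if "q \<in> normals" "q \<noteq> n" for q
  proof -
    have nq: "n \<noteq> q" using that(2) by auto
    have "mink n q = 0 \<or> mink n q \<le> 2 - 2 * tau" by (rule F1[OF n that(1) nq])
    then show ?thesis using tau_facts by linarith
  qed
  have nonpos': "mink m q \<le> 0" if "q \<in> normals" "q \<noteq> m" for q
  proof -
    have nq: "m \<noteq> q" using that(2) by auto
    have "mink m q = 0 \<or> mink m q \<le> 2 - 2 * tau" by (rule F1[OF m that(1) nq])
    then show ?thesis using tau_facts by linarith
  qed
  have mn: "mink m n = 0" using nm mink_sym[of m n] by simp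
  have ymn: "mink y n = 0" "mink y m = 0" using my[OF n] my[OF m] normal_self[OF n] normal_self[OF m] nm mn by simp_all
  have yq: "mink y q \<le> 0" if q: "q \<in> normals" for q
  proof (cases "q = n \<or> q = m")
    case True then show ?thesis using ymn by auto
  next
    case False
    then show ?thesis using my[OF q] nonpos[OF q] nonpos'[OF q] tau_facts by auto
  qed
  have "mink x q \<le> 0" if "q \<in> normals" for q unfolding mx using yq[OF that] pos by (simp add: divide_nonpos_pos)
  then have "x \<in> cell120" unfolding cell120_def using xH by simp
  moreover have "mink x n = 0" "mink x m = 0" unfolding mx using ymn by simp_all
  ultimately have "x \<in> wall n \<inter> wall m" unfolding wall_def by simp
  then show ?thesis by blast
qed

lemma disj_walls:
  assumes n: "n \<in> normals" and m: "m \<in> normals" and ne: "n \<noteq> m" and nm: "mink n m \<noteq> 0"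
  shows "wall n \<inter> wall m = {}"
proof (rule ccontr)
  assume "wall n \<inter> wall m \<noteq> {}"
  then obtain x where x: "x \<in> H4" "mink x n = 0" "mink x m = 0" unfolding wall_def cell120_def by auto
  have "mink n m \<le> 2 - 2 * tau" using F1[OF n m ne] nm by auto
  then have uu: "mink (n + m) (n + m) < 0"
    using normal_self[OF n] normal_self[OF m] tau_facts mink_sym[of m n]
    by (simp add: mink_add_left mink_add_right)
  have "mink x (n + m) = 0" using x by (simp add: mink_add_right)
  then show False using revCS[OF x(1) uu] by simp
qed

lemma wall_inj: "inj_on wall normals"
proof (rule inj_onI)
  fix n m assume n: "n \<in> normals" and m: "m \<in> normals" and e: "wall n = wall m"
  show "n = m"
  proof (rule ccontr)
    assume ne: "n \<noteq> m"
    obtain x where "x \<in> wall n" "\<forall>q\<in>normals. q \<noteq> n \<longrightarrow> mink x q \<noteq> 0" using wall_point[OF n] by blast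
    then show False using e m ne unfolding wall_def by auto
  qed
qed

section \<open>Counting the normals\<close>

definition vA :: "nat \<Rightarrow> real \<Rightarrow> real list" where
  "vA j \<sigma> = [if j = 0 then 2*\<sigma> else 0, if j = 1 then 2*\<sigma> else 0, if j = 2 then 2*\<sigma> else 0, if j = 3 then 2*\<sigma> else 0]"

lemma typeA_vA: assumes p: "p \<in> Ev" and s: "sgs s"
  shows "nv 0 p s = mk cc (vA (inv p 0) (s (inv p 0)))"
proof -
  have pp: "p permutes {..<4}" using Ev_permutes[OF p] .
  have "actl p s (base 0) = vA (inv p 0) (s (inv p 0))"
  proof (rule list4_eqI)
    fix i :: nat assume i: "i < 4"
    have pi: "p i < 4" using permutes4_lt[OF pp i] .
    have iff: "p i = 0 \<longleftrightarrow> i = inv p 0"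
      using permutes_inverses[OF pp] by metis
    have b: "base 0 ! p i = (if p i = 0 then 2 else 0)" using lt4_cases[OF pi] by (auto simp: base_def)
    have "actl p s (base 0) ! i = (if i = inv p 0 then 2 * s (inv p 0) else 0)"
      using i b iff by (auto simp: actl_nth)
    also have "\<dots> = vA (inv p 0) (s (inv p 0)) ! i" using lt4_cases[OF i] unfolding vA_def by auto
    finally show "actl p s (base 0) ! i = vA (inv p 0) (s (inv p 0)) ! i" .
  qed (simp_all add: vA_def)
  then show ?thesis unfolding nv_def by simp
qed

lemma typeB_vB: assumes p: "p \<in> Ev" shows "nv 1 p s = mk cc [s 0, s 1, s 2, s 3]"
proof -
  have pp: "p permutes {..<4}" using Ev_permutes[OF p] .
  have b1: "base 1 ! p i = 1" if "i < 4" for i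
  proof -
    have "p i < 4" by (rule permutes4_lt[OF pp that])
    then show ?thesis using lt4_cases[of "p i"] by (auto simp: base_def)
  qed
  have "actl p s (base 1) = [s 0, s 1, s 2, s 3]" unfolding actl_def using b1[of 0] b1[of 1] b1[of 2] b1[of 3] by simp
  then show ?thesis unfolding nv_def by simp
qed

lemma card_Ev: "finite Ev" "card Ev \<le> 12"
proof -
  define f where "f = (\<lambda>p::nat\<Rightarrow>nat. [p 0, p 1, p 2, p 3])"
  have inj: "inj_on f Ev"
  proof (rule inj_onI)
    fix p q assume "p \<in> Ev" "q \<in> Ev" "f p = f q"
    then show "p = q" using perm4_eq[OF Ev_permutes Ev_permutes] unfolding f_def by auto
  qed
  have sub: "f ` Ev \<subseteq> set E12" unfolding f_def using E12_complete by auto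
  then show "finite Ev" using inj finite_imageD finite_subset by (metis List.finite_set)
  have "card Ev = card (f ` Ev)" using card_image[OF inj] by simp
  also have "\<dots> \<le> card (set E12)" using sub by (intro card_mono) auto
  also have "\<dots> \<le> 12" using card_length[of E12] by (simp add: E12_def)
  finally show "card Ev \<le> 12" .
qed

lemma card_normals: "finite normals" "card normals \<le> 120"
proof -
  have "normals \<subseteq> conv ` set NLgen" using normals_NLgen by blast
  then show fin: "finite normals" using finite_subset by blast
  define S2 where "S2 = {1, -1::real}"
  have cS2: "card S2 = 2" "finite S2" unfolding S2_def by simp_all
  define NA where "NA = (\<lambda>(j,\<sigma>). mk cc (vA j \<sigma>)) ` ({..<4::nat} \<times> S2)"
  define NB where "NB = (\<lambda>(a,b,c,d). mk cc [a,b,c,d]) ` (S2 \<times> S2 \<times> S2 \<times> S2)"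
  define NC where "NC = (\<lambda>(q,a,b,c). mk cc (permute_list q [a*tau, b, c/tau, 0])) ` (Ev \<times> S2 \<times> S2 \<times> S2)"
  have sub: "normals \<subseteq> NA \<union> NB \<union> NC"
  proof
    fix n assume "n \<in> normals"
    then obtain k p s where n: "n = nv k p s" and k: "k < 3" and p: "p \<in> Ev" and s: "sgs s"
      unfolding normals_param by blast
    have "k = 0 \<or> k = 1 \<or> k = 2" using k by arith
    then show "n \<in> NA \<union> NB \<union> NC"
    proof (elim disjE)
      assume k0: "k = 0"
      have "inv p 0 < 4" using permutes4_lt[OF permutes_inv[OF Ev_permutes[OF p]]] by simp
      moreover have "s (inv p 0) \<in> S2" using s unfolding sgs_def S2_def by auto
      ultimately have "(inv p 0, s (inv p 0)) \<in> {..<4::nat} \<times> S2" by simp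
      then have "n \<in> NA" unfolding NA_def n k0 typeA_vA[OF p s] by force
      then show ?thesis by simp
    next
      assume k1: "k = 1"
      have "s 0 \<in> S2" "s 1 \<in> S2" "s 2 \<in> S2" "s 3 \<in> S2" using s unfolding sgs_def S2_def by auto
      then have "(s 0, s 1, s 2, s 3) \<in> S2 \<times> S2 \<times> S2 \<times> S2" by simp
      then have "n \<in> NB" unfolding NB_def n k1 typeB_vB[OF p] by force
      then show ?thesis by simp
    next
      assume k2: "k = 2"
      then obtain u1 u2 u3 where u: "u1 \<in> {-1,1}" "u2 \<in> {-1,1}" "u3 \<in> {-1,1}"
        "actl p s (base 2) = permute_list p [u1*tau, u2, u3/tau, 0]"
        using typeC_sup[OF p s] by blast
      have "n = mk cc (permute_list p [u1*tau, u2, u3/tau, 0])" using n u(4) k2 unfolding nv_def by simp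
      moreover have "(p, u1, u2, u3) \<in> Ev \<times> S2 \<times> S2 \<times> S2" using p u unfolding S2_def by auto
      ultimately have "n \<in> NC" unfolding NC_def by force
      then show ?thesis by simp
    qed
  qed
  have "card NA \<le> 8"
  proof -
    have "card NA \<le> card ({..<4::nat} \<times> S2)" unfolding NA_def by (rule card_image_le) (simp add: cS2)
    also have "\<dots> = 8" using cS2 by (simp add: card_cartesian_product)
    finally show ?thesis .
  qed
  moreover have "card NB \<le> 16"
  proof -
    have "card NB \<le> card (S2 \<times> S2 \<times> S2 \<times> S2)" unfolding NB_def by (rule card_image_le) (simp add: cS2)
    also have "\<dots> = 16" using cS2 by (simp add: card_cartesian_product)
    finally show ?thesis .
  qed
  moreover have "card NC \<le> 96"
  proof -
    have "card NC \<le> card (Ev \<times> S2 \<times> S2 \<times> S2)" unfolding NC_def by (rule card_image_le) (simp add: cS2 card_Ev)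
    also have "\<dots> = card Ev * 8" using cS2 by (simp add: card_cartesian_product)
    also have "\<dots> \<le> 96" using card_Ev(2) by simp
    finally show ?thesis .
  qed
  moreover have "card normals \<le> card (NA \<union> NB \<union> NC)"
    using sub by (intro card_mono) (auto simp: NA_def NB_def NC_def cS2 card_Ev)
  moreover have "card (NA \<union> NB \<union> NC) \<le> card NA + card NB + card NC"
    by (metis card_Un_le add_le_mono1 order_trans)
  ultimately show "card normals \<le> 120" by linarith
qed

section \<open>The combinatorial bound\<close>

lemma indep_bound:
  fixes V :: "'a set" and A :: "'a \<Rightarrow> 'a \<Rightarrow> bool"
  assumes fin: "finite V" and cV: "card V \<le> 120"
    and sym: "\<And>a b. A a b \<Longrightarrow> A b a"
    and deg: "\<And>v. v \<in> V \<Longrightarrow> card {u\<in>V. A v u} = 12"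
    and loc: "\<And>v T. v \<in> V \<Longrightarrow> T \<subseteq> {u\<in>V. A v u} \<Longrightarrow> \<forall>a\<in>T. \<forall>b\<in>T. \<not> A a b \<Longrightarrow> card T \<le> 3"
    and SV: "S \<subseteq> V" and ind: "\<forall>a\<in>S. \<forall>b\<in>S. \<not> A a b"
  shows "card S \<le> 24"
proof -
  have finS: "finite S" using SV fin finite_subset by blast
  have "12 * card S = (\<Sum>s\<in>S. card {u\<in>V. A s u})" using deg SV by (simp add: subset_iff)
  also have "\<dots> = (\<Sum>s\<in>S. \<Sum>u\<in>V. if A s u then 1 else 0)"
  proof (rule sum.cong)
    fix s show "card {u\<in>V. A s u} = (\<Sum>u\<in>V. if A s u then 1 else 0)"
      using fin by (simp add: sum.If_cases Int_def)
  qed simp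
  also have "\<dots> = (\<Sum>u\<in>V. \<Sum>s\<in>S. if A s u then 1 else 0)" by (rule sum.swap)
  also have "\<dots> = (\<Sum>u\<in>V. card {s\<in>S. A u s})"
  proof (rule sum.cong)
    fix u assume u: "u \<in> V"
    have "(\<Sum>s\<in>S. if A s u then 1 else 0) = card {s\<in>S. A s u}" using finS by (simp add: sum.If_cases Int_def)
    also have "{s\<in>S. A s u} = {s\<in>S. A u s}" using sym by blast
    finally show "(\<Sum>s\<in>S. if A s u then 1 else 0) = card {s\<in>S. A u s}" .
  qed simp
  also have "\<dots> = (\<Sum>u\<in>V - S. card {s\<in>S. A u s})"
  proof -
    have "(\<Sum>u\<in>V. card {s\<in>S. A u s}) = (\<Sum>u\<in>V - S. card {s\<in>S. A u s}) + (\<Sum>u\<in>S. card {s\<in>S. A u s})"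
      using sum.subset_diff[OF SV fin] by simp
    moreover have e: "card {s\<in>S. A u s} = 0" if u: "u \<in> S" for u
    proof -
      have "{s\<in>S. A u s} = {}" using ind u by blast
      then show ?thesis by (simp only: card.empty)
    qed
    then have "(\<Sum>u\<in>S. card {s\<in>S. A u s}) = 0" by (simp add: sum.neutral)
    ultimately show ?thesis by simp
  qed
  also have "\<dots> \<le> (\<Sum>u\<in>V - S. 3)"
  proof (rule sum_mono)
    fix u assume u: "u \<in> V - S"
    have "{s\<in>S. A u s} \<subseteq> {x\<in>V. A u x}" using SV by auto
    moreover have "\<forall>a\<in>{s\<in>S. A u s}. \<forall>b\<in>{s\<in>S. A u s}. \<not> A a b" using ind by auto
    ultimately show "card {s\<in>S. A u s} \<le> 3" using loc u by blast
  qed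
  also have "\<dots> = 3 * card (V - S)" by simp
  also have "\<dots> = 3 * (card V - card S)" using card_Diff_subset[OF finS SV] by simp
  finally have "12 * card S \<le> 3 * (card V - card S)" .
  then show ?thesis using cV by linarith
qed

section \<open>A large family of disjoint walls\<close>

definition L24P :: "(nat * nat list * int list) list" where "L24P = [(0, [0, 1, 2, 3], [1, 1, 1, 1]), (0, [0, 1, 2, 3], [-1, 1, 1, 1]), (0, [1, 0, 3, 2], [1, 1, 1, 1]), (0, [1, 0, 3, 2], [1, -1, 1, 1]), (0, [1, 2, 0, 3], [1, 1, 1, 1]), (0, [1, 2, 0, 3], [1, 1, -1, 1]), (0, [1, 3, 2, 0], [1, 1, 1, 1]), (0, [1, 3, 2, 0], [1, 1, 1, -1]), (1, [0, 1, 2, 3], [1, 1, 1, 1]), (1, [0, 1, 2, 3], [1, 1, 1, -1]), (1, [0, 1, 2, 3], [1, 1, -1, 1]), (1, [0, 1, 2, 3], [1, 1, -1, -1]), (1, [0, 1, 2, 3], [1, -1, 1, 1]), (1, [0, 1, 2, 3], [1, -1, 1, -1]), (1, [0, 1, 2, 3], [1, -1, -1, 1]), (1, [0, 1, 2, 3], [1, -1, -1, -1]), (1, [0, 1, 2, 3], [-1, 1, 1, 1]), (1, [0, 1, 2, 3], [-1, 1, 1, -1]), (1, [0, 1, 2, 3], [-1, 1, -1, 1]), (1, [0, 1, 2, 3], [-1, 1, -1, -1]), (1, [0, 1, 2, 3], [-1, -1, 1, 1]), (1, [0, 1, 2, 3], [-1, -1, 1, -1]), (1, [0, 1, 2, 3],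 [-1, -1, -1, 1]), (1, [0, 1, 2, 3], [-1, -1, -1, -1])]"

definition L24 :: "zt list list" where "L24 = map (\<lambda>(k,t,s). actI t s (baseI k)) L24P"
definition ok24 :: bool where
  "ok24 = (length L24P = 24 \<and> list_all (\<lambda>(k,t,s). k < 3 \<and> t \<in> set E12 \<and> s \<in> set SG16) L24P \<and>
     list_all (\<lambda>i. list_all (\<lambda>j. i = j \<or> low (dt (L24!i) (L24!j))) [0..<24]) [0..<24])"

lemma comp_ok24: "ok24" by code_simp

lemma L24_normals: "x \<in> set L24 \<Longrightarrow> conv x \<in> normals"
proof -
  assume x: "x \<in> set L24"
  obtain k t s where p: "(k,t,s) \<in> set L24P" "x = actI t s (baseI k)" using x unfolding L24_def by auto
  have "k < 3" "t \<in> set E12" "s \<in> set SG16" using comp_ok24 p(1) unfolding ok24_def list_all_iff by auto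
  then show ?thesis using gen_normals p(2) by simp
qed

lemma L24_low: assumes "i < 24" "j < 24" "i \<noteq> j" shows "mink (conv (L24!i)) (conv (L24!j)) \<le> 2 - 2 * tau"
proof -
  have "i \<in> set [0..<24]" "j \<in> set [0..<24]" using assms by auto
  then have "low (dt (L24!i) (L24!j))" using comp_ok24 assms(3) unfolding ok24_def list_all_iff by blast
  then show ?thesis using low_zr mink_conv by simp
qed

lemma len24: "length L24 = 24" using comp_ok24 unfolding ok24_def L24_def by simp

lemma S24_card: "card (conv ` set L24) = 24"
proof -
  have "conv (L24!i) \<noteq> conv (L24!j)" if "i < 24" "j < 24" "i \<noteq> j" for i j
  proof
    assume e: "conv (L24!i) = conv (L24!j)"
    have "L24!i \<in> set L24" using that len24 by simp
    then have "mink (conv (L24!i)) (conv (L24!i)) = 4 - 2 * tau" using L24_normals normal_self by blast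
    then show False using L24_low[OF that] e tau_bounds by simp
  qed
  then have "distinct (map conv L24)" unfolding distinct_conv_nth using len24 by auto
  then have "card (set (map conv L24)) = 24" using distinct_card len24 by fastforce
  then show ?thesis by simp
qed

lemma S24_indep: assumes "a \<in> conv ` set L24" "b \<in> conv ` set L24" "a \<noteq> b" shows "mink a b \<noteq> 0"
proof -
  obtain i j where ij: "i < 24" "j < 24" "a = conv (L24!i)" "b = conv (L24!j)"
    using assms(1,2) len24 by (auto simp: in_set_conv_nth)
  then have "i \<noteq> j" using assms(3) by auto
  then have "mink a b \<le> 2 - 2 * tau" using L24_low ij by simp
  then show ?thesis using tau_bounds by auto
qed

theorem proposition3p1:
  shows "(\<exists>W. pairwise_disjoint_walls W \<and> card W = 24)
       \<and> (\<forall>W. pairwise_disjoint_walls W \<longrightarrow> card W \<le> 24)"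
proof
  define S where "S = conv ` set L24"
  have Sn: "S \<subseteq> normals" unfolding S_def using L24_normals by blast
  have "pairwise_disjoint_walls (wall ` S)"
    unfolding pairwise_disjoint_walls_def
  proof (intro conjI ballI impI)
    show "wall ` S \<subseteq> walls" unfolding walls_def using Sn by blast
  next
    fix A B assume "A \<in> wall ` S" "B \<in> wall ` S" "A \<noteq> B"
    then obtain a b where ab: "a \<in> S" "b \<in> S" "A = wall a" "B = wall b" "a \<noteq> b" by blast
    have "mink a b \<noteq> 0" using S24_indep[of a b] ab(1,2,5) unfolding S_def by simp
    moreover have "a \<in> normals" "b \<in> normals" using ab(1,2) Sn by auto
    ultimately show "A \<inter> B = {}" using disj_walls[of a b] ab(3,4,5) by simp
  qed
  moreover have "card (wall ` S) = 24"
    using card_image[OF inj_on_subset[OF wall_inj Sn]] S24_card unfolding S_def by simp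
  ultimately show "\<exists>W. pairwise_disjoint_walls W \<and> card W = 24" by blast
next
  show "\<forall>W. pairwise_disjoint_walls W \<longrightarrow> card W \<le> 24"
  proof (intro allI impI)
    fix W assume W: "pairwise_disjoint_walls W"
    define S where "S = {n \<in> normals. wall n \<in> W}"
    have Wsub: "W \<subseteq> wall ` normals" using W unfolding pairwise_disjoint_walls_def walls_def by simp
    have WS: "W = wall ` S"
    proof (rule set_eqI, rule iffI)
      fix A assume A: "A \<in> W"
      then obtain n where n: "n \<in> normals" "A = wall n" using Wsub by blast
      then have "n \<in> S" unfolding S_def using A by simp
      then show "A \<in> wall ` S" using n(2) by blast
    next
      fix A assume "A \<in> wall ` S"
      then obtain n where n: "n \<in> S" "A = wall n" by blast
      have "wall n \<in> W" using n(1) unfolding S_def by simp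
      then show "A \<in> W" using n(2) by simp
    qed
    have SN: "S \<subseteq> normals" unfolding S_def by auto
    have injS: "inj_on wall S" by (rule inj_on_subset[OF wall_inj SN])
    have cW: "card W = card S" using card_image[OF injS] WS by simp
    have ind: "\<forall>a\<in>S. \<forall>b\<in>S. \<not> mink a b = 0"
    proof (intro ballI)
      fix a b assume a: "a \<in> S" and b: "b \<in> S"
      show "\<not> mink a b = 0"
      proof
        assume e: "mink a b = 0"
        have an: "a \<in> normals" and bn: "b \<in> normals" using a b unfolding S_def by auto
        have "a \<noteq> b" using e normal_self[OF an] tau_bounds by auto
        then have "wall a \<noteq> wall b" using inj_onD[OF wall_inj _ an bn] by blast
        moreover have "wall a \<in> W" "wall b \<in> W" using a b unfolding S_def by auto
        ultimately have "wall a \<inter> wall b = {}" using W unfolding pairwise_disjoint_walls_def by blast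
        then show False using adj_point[OF an bn e] by simp
      qed
    qed
    have "card S \<le> 24"
    proof (rule indep_bound[of normals "\<lambda>a b. mink a b = 0"])
      show "finite normals" "card normals \<le> 120" using card_normals by auto
      show "\<And>a b. mink a b = 0 \<Longrightarrow> mink b a = 0" using mink_sym by metis
      show "\<And>v. v \<in> normals \<Longrightarrow> card {u \<in> normals. mink v u = 0} = 12" using F2 by blast
      show "\<And>v T. v \<in> normals \<Longrightarrow> T \<subseteq> {u \<in> normals. mink v u = 0} \<Longrightarrow> \<forall>a\<in>T. \<forall>b\<in>T. \<not> mink a b = 0 \<Longrightarrow> card T \<le> 3"
        using F3 by blast
      show "S \<subseteq> normals" unfolding S_def by auto
      show "\<forall>a\<in>S. \<forall>b\<in>S. \<not> mink a b = 0" using ind .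
    qed
    then show "card W \<le> 24" using cW by simp
  qed
qed

end
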